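(* Let $p\ge3$, $X\sim N_p(\theta,D)$ with $D=\operatorname{diag}(d_1,\ldots,d_p)$, $d_j>0$, and $\Gamma=\operatorname{diag}(\gamma_1,\ldots,\gamma_p)$, $\gamma_j\ge0$. Let $d_j^*=d_j^2/(d_j+\gamma_j)$ with indices sorted so that $d_1^*\ge\cdots\ge d_p^*$. Let $A^\dagger$ be the unique maximizer of $c^*(D,A)=\sum_jd_ja_j-2\max_jd_ja_j$ over diagonal $A=\operatorname{diag}(a_1,\ldots,a_p)$, $a_j\ge0$, with $\sum_j(d_j+\gamma_j)a_j^2=\sum_jd_j^*$, and let $\delta_{A^\dagger(\Gamma)}(X)=X-\frac{c^*(D,A^\dagger)}{X^\top A^{\dagger\top}A^\dagger X}A^\dagger X$. Let $\Gamma_\alpha=\alpha(D+\Gamma)-D$ and $\alpha_0=\max_{j=1,\ldots,p}\{d_j/(d_j+\gamma_j)\}\ (\le1)$. Then for each $\alpha\ge\alpha_0$, \[ \max\big[R\{\delta_{A^\dagger(\Gamma)},\pi_{\Gamma_\alpha}\},\,R\{\delta_{A^\dagger(\Gamma)},\mathcal H_{\Gamma_\alpha}\}\big]\le R(\delta^{\mathrm{Bayes}}_{\Gamma_\alpha},\pi_{\Gamma_\alpha})+\alpha^{-1}(d_1^*+d_2^*+d_3^*+d_4^* )=R^L(\mathcal H_{\Gamma_\alpha})+\alpha^{-1}(d_1^*+d_2^*+d_3^*+d_4^* ), \] where $R(\delta^{\mathrm{Bayes}}_{\Gamma_\alpha},\pi_{\Gamma_\alpha})=\operatorname{tr}(D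)-\alpha^{-1}\sum_{j=1}^pd_j^*$.
   Context: For a nonnegative definite diagonal $\Lambda=\operatorname{diag}(\lambda_1,\ldots,\lambda_p)$: $\pi_\Lambda$ is the prior $\theta\sim N(0,\Lambda)$; $R(\delta,\pi_\Lambda)=E^{\pi_\Lambda}E_\theta\|\delta(X)-\theta\|^2$ is the Bayes risk; $\delta^{\mathrm{Bayes}}_\Lambda$ is the Bayes rule with components $\{1-d_j/(d_j+\lambda_j)\}X_j$; $\mathcal H_\Lambda=\{\theta:\theta_j^2\le\lambda_j,\ j=1,\ldots,p\}$; $R(\delta,\mathcal H_\Lambda)=\sup_{\theta\in\mathcal H_\Lambda}E_\theta\|\delta(X)-\theta\|^2$; and $R^L(\mathcal H_\Lambda)=\inf_{\delta\ \text{linear}}R(\delta,\mathcal H_\Lambda)$ is the minimax linear risk over $\mathcal H_\Lambda$. For $\alpha\ge\alpha_0$, $\Gamma_\alpha$ is nonnegative definite. When $p=3$, $d_4^*$ is interpreted as $0$. *)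

theory Defs
  imports "HOL-Probability.Probability"
begin

text \<open>Vectors in R^p are represented as functions nat => real, only the
coordinates 0..p-1 being relevant (index j here corresponds to index j+1 in the paper).
Diagonal matrices are represented by their diagonal.\<close>

definition normal_measure :: "real \<Rightarrow> real \<Rightarrow> real measure" where
  "normal_measure \<mu> v =
     (if v = 0 then return lborel \<mu> else density lborel (normal_density \<mu> (sqrt v)))"

definition gauss_vec :: "nat \<Rightarrow> (nat \<Rightarrow> real) \<Rightarrow> (nat \<Rightarrow> real) \<Rightarrow> (nat \<Rightarrow> real) measure" where
  "gauss_vec p \<mu> v = PiM {..<p} (\<lambda>j. normal_measure (\<mu> j) (v j))"

definition risk :: "nat \<Rightarrow> (nat \<Rightarrow> real) \<Rightarrow> ((nat \<Rightarrow> real) \<Rightarrow> (nat \<Rightarrow> real)) \<Rightarrow> (nat \<Rightarrow> real) \<Rightarrow> ennreal" where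
  "risk p d \<delta> \<theta> = (\<integral>\<^sup>+ x. ennreal (\<Sum>j<p. (\<delta> x j - \<theta> j)\<^sup>2) \<partial>gauss_vec p \<theta> d)"

definition bayes_risk :: "nat \<Rightarrow> (nat \<Rightarrow> real) \<Rightarrow> ((nat \<Rightarrow> real) \<Rightarrow> (nat \<Rightarrow> real)) \<Rightarrow> (nat \<Rightarrow> real) \<Rightarrow> ennreal" where
  "bayes_risk p d \<delta> lam = (\<integral>\<^sup>+ \<theta>. risk p d \<delta> \<theta> \<partial>gauss_vec p (\<lambda>_. 0) lam)"

definition hyperrect :: "nat \<Rightarrow> (nat \<Rightarrow> real) \<Rightarrow> (nat \<Rightarrow> real) set" where
  "hyperrect p lam = {\<theta>. \<theta> \<in> extensional {..<p} \<and> (\<forall>j<p. (\<theta> j)\<^sup>2 \<le> lam j)}"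

definition max_risk :: "nat \<Rightarrow> (nat \<Rightarrow> real) \<Rightarrow> ((nat \<Rightarrow> real) \<Rightarrow> (nat \<Rightarrow> real)) \<Rightarrow> (nat \<Rightarrow> real) \<Rightarrow> ennreal" where
  "max_risk p d \<delta> lam = (SUP \<theta>\<in>hyperrect p lam. risk p d \<delta> \<theta>)"

definition lin_est :: "nat \<Rightarrow> (nat \<Rightarrow> nat \<Rightarrow> real) \<Rightarrow> (nat \<Rightarrow> real) \<Rightarrow> (nat \<Rightarrow> real)" where
  "lin_est p C x = (\<lambda>i. \<Sum>j<p. C i j * x j)"

definition minimax_linear_risk :: "nat \<Rightarrow> (nat \<Rightarrow> real) \<Rightarrow> (nat \<Rightarrow> real) \<Rightarrow> ennreal" where
  "minimax_linear_risk p d lam = (INF C. max_risk p d (lin_est p C) lam)"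

definition bayes_rule :: "(nat \<Rightarrow> real) \<Rightarrow> (nat \<Rightarrow> real) \<Rightarrow> (nat \<Rightarrow> real) \<Rightarrow> (nat \<Rightarrow> real)" where
  "bayes_rule d lam x = (\<lambda>j. (1 - d j / (d j + lam j)) * x j)"

definition cstar :: "nat \<Rightarrow> (nat \<Rightarrow> real) \<Rightarrow> (nat \<Rightarrow> real) \<Rightarrow> real" where
  "cstar p d a = (\<Sum>j<p. d j * a j) - 2 * Max ((\<lambda>j. d j * a j) ` {..<p})"

definition shrink_est :: "nat \<Rightarrow> (nat \<Rightarrow> real) \<Rightarrow> (nat \<Rightarrow> real) \<Rightarrow> (nat \<Rightarrow> real) \<Rightarrow> (nat \<Rightarrow> real)" where
  "shrink_est p d a x =
     (\<lambda>j. x j - cstar p d a / (\<Sum>k<p. (a k * x k)\<^sup>2) * (a j * x j))"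

definition dstar :: "(nat \<Rightarrow> real) \<Rightarrow> (nat \<Rightarrow> real) \<Rightarrow> nat \<Rightarrow> real" where
  "dstar d \<gamma> j = (d j)\<^sup>2 / (d j + \<gamma> j)"

definition feasibleA :: "nat \<Rightarrow> (nat \<Rightarrow> real) \<Rightarrow> (nat \<Rightarrow> real) \<Rightarrow> (nat \<Rightarrow> real) \<Rightarrow> bool" where
  "feasibleA p d \<gamma> a \<longleftrightarrow> (\<forall>j<p. a j \<ge> 0) \<and>
     (\<Sum>j<p. (d j + \<gamma> j) * (a j)\<^sup>2) = (\<Sum>j<p. dstar d \<gamma> j)"

end

theory Submission
  imports Defs "HOL-Real_Asymp.Real_Asymp"
begin


lemma normal_density_abs: "normal_density \<mu> \<bar>\<sigma>\<bar> = normal_density \<mu> \<sigma>"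
  by (simp add: normal_density_def fun_eq_iff)

lemma nm_pos: "v \<noteq> 0 \<Longrightarrow> normal_measure \<mu> v = density lborel (normal_density \<mu> (sqrt v))"
  by (simp add: normal_measure_def)

lemma nm_prob: "prob_space (normal_measure \<mu> v)"
proof (cases "v = 0")
  case True thus ?thesis by (simp add: normal_measure_def prob_space_return)
next
  case False
  have "0 < \<bar>sqrt v\<bar>" using False by simp
  from prob_space_normal_density[OF this] show ?thesis using False
    by (simp add: normal_measure_def normal_density_abs)
qed

lemma nm_sets[measurable_cong]: "sets (normal_measure \<mu> v) = sets borel"
  by (simp add: normal_measure_def)

lemma nm_space[simp]: "space (normal_measure \<mu> v) = UNIV"
  by (simp add: normal_measure_def)

lemma hbi_return:
  fixes f :: "real \<Rightarrow> real"
  assumes [measurable]: "f \<in> borel_measurable borel"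
  shows "has_bochner_integral (return lborel a) f (f a)"
proof -
  have "integrable (return lborel a) f"
    unfolding integrable_iff_bounded by (simp add: nn_integral_return)
  moreover have "integral\<^sup>L (return lborel a) f = f a"
    by (simp add: integral_return)
  ultimately show ?thesis by (simp add: has_bochner_integral_iff)
qed

lemma hbi_nm_pos:
  fixes f :: "real \<Rightarrow> real"
  assumes "v > 0" and [measurable]: "f \<in> borel_measurable borel"
    and "has_bochner_integral lborel (\<lambda>x. normal_density \<mu> (sqrt v) x * f x) r"
  shows "has_bochner_integral (normal_measure \<mu> v) f r"
  unfolding nm_pos[OF less_imp_neq[OF assms(1), symmetric]]
  by (rule has_bochner_integral_density) (use assms in auto)

lemma nm_mom1: "has_bochner_integral (normal_measure \<mu> v) (\<lambda>x. x - \<mu>) 0"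
proof (cases "v = 0")
  case True
  show ?thesis using hbi_return[of "\<lambda>x. x - \<mu>" \<mu>] True by (simp add: normal_measure_def)
next
  case False
  have s: "0 < \<bar>sqrt v\<bar>" using False by simp
  have "has_bochner_integral lborel (\<lambda>x. normal_density \<mu> \<bar>sqrt v\<bar> x * (x - \<mu>)^(2*0+1)) 0"
    by (rule normal_moment_odd[OF s])
  then have "has_bochner_integral lborel (\<lambda>x. normal_density \<mu> (sqrt v) x * (x - \<mu>)) 0"
    by (simp add: normal_density_abs)
  then show ?thesis
    unfolding nm_pos[OF False]
    by (intro has_bochner_integral_density) auto
qed

lemma nm_mom2: assumes "v \<ge> 0" shows "has_bochner_integral (normal_measure \<mu> v) (\<lambda>x. (x - \<mu>)^2) v"
proof (cases "v = 0")
  case True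
  show ?thesis using hbi_return[of "\<lambda>x. (x - \<mu>)^2" \<mu>] True by (simp add: normal_measure_def)
next
  case False
  have s: "0 < \<bar>sqrt v\<bar>" using False by simp
  have "has_bochner_integral lborel (\<lambda>x. normal_density \<mu> \<bar>sqrt v\<bar> x * (x - \<mu>)^(2*1))
      (fact (2 * 1) / ((2 / \<bar>sqrt v\<bar>\<^sup>2)^1 * fact 1))"
    by (rule normal_moment_even[OF s])
  then have "has_bochner_integral lborel (\<lambda>x. normal_density \<mu> (sqrt v) x * (x - \<mu>)^2) v"
    using assms False by (simp add: normal_density_abs)
  then show ?thesis
    unfolding nm_pos[OF False]
    by (intro has_bochner_integral_density) auto
qed



lemma hbi_const_prob: assumes "prob_space M" shows "has_bochner_integral M (\<lambda>x. c::real) c"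
proof -
  interpret prob_space M by fact
  show ?thesis by (simp add: has_bochner_integral_iff prob_space)
qed

lemma nm_pps: "product_prob_space (\<lambda>j. normal_measure (\<mu> j) (v j))"
  by (rule product_prob_spaceI) (rule nm_prob)

lemma prod_two:
  fixes F :: "'i \<Rightarrow> real"
  assumes "finite I" "j \<in> I" "k \<in> I" "j \<noteq> k"
  shows "(\<Prod>l\<in>I. if l = j then a else if l = k then b else 1) = (a * b :: real)"
proof -
  have "(\<Prod>l\<in>I. if l = j then a else if l = k then b else 1)
      = (if j \<in> I then a else 1) * (\<Prod>l\<in>I - {j}. if l = k then b else 1)"
    using assms by (subst prod.remove[of _ j]) (auto intro!: prod.cong)
  also have "(\<Prod>l\<in>I - {j}. if l = k then b else (1::real)) = b"
    using assms by (subst prod.delta) auto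
  finally show ?thesis using assms by simp
qed

lemma (in product_prob_space) hbi_two:
  fixes f g :: "'a \<Rightarrow> real"
  assumes "finite I" "j \<in> I" "k \<in> I" "j \<noteq> k"
    and f: "has_bochner_integral (M j) f a" and g: "has_bochner_integral (M k) g b"
  shows "has_bochner_integral (Pi\<^sub>M I M) (\<lambda>x. f (x j) * g (x k)) (a * b)"
proof -
  define F where "F l = (if l = j then f else if l = k then g else (\<lambda>_. 1::real))" for l
  have int: "integrable (M l) (F l)" if "l \<in> I" for l
  proof -
    interpret prob_space "M l" by (rule prob_space)
    show ?thesis using f g by (auto simp: F_def has_bochner_integral_iff)
  qed
  have ints: "integral\<^sup>L (M l) (F l) = (if l = j then a else if l = k then b else 1)" for l
  proof -
    interpret prob_space "M l" by (rule prob_space)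
    show ?thesis using f g by (auto simp: F_def has_bochner_integral_iff prob_space.prob_space[OF prob_space])
  qed
  have eq: "(\<lambda>x. (\<Prod>l\<in>I. F l (x l))) = (\<lambda>x. f (x j) * g (x k))"
  proof
    fix x
    have "(\<Prod>l\<in>I. F l (x l)) = (\<Prod>l\<in>I. if l = j then f (x j) else if l = k then g (x k) else 1)"
      by (rule prod.cong) (auto simp: F_def)
    also have "\<dots> = f (x j) * g (x k)" by (rule prod_two[OF assms(1-4)])
    finally show "(\<Prod>l\<in>I. F l (x l)) = f (x j) * g (x k)" .
  qed
  have "integrable (Pi\<^sub>M I M) (\<lambda>x. (\<Prod>l\<in>I. F l (x l)))"
    by (rule product_integrable_prod[OF assms(1) int])
  moreover have "(\<integral>x. (\<Prod>l\<in>I. F l (x l)) \<partial>Pi\<^sub>M I M) = (\<Prod>l\<in>I. integral\<^sup>L (M l) (F l))"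
    by (rule product_integral_prod[OF assms(1) int])
  moreover have "(\<Prod>l\<in>I. integral\<^sup>L (M l) (F l)) = a * b"
    unfolding ints by (rule prod_two[OF assms(1-4)])
  ultimately show ?thesis unfolding eq by (simp add: has_bochner_integral_iff)
qed

lemma (in product_prob_space) hbi_one:
  fixes f :: "'a \<Rightarrow> real"
  assumes "finite I" "j \<in> I"
    and f: "has_bochner_integral (M j) f a"
  shows "has_bochner_integral (Pi\<^sub>M I M) (\<lambda>x. f (x j)) a"
proof -
  define F where "F l = (if l = j then f else (\<lambda>_. 1::real))" for l
  have int: "integrable (M l) (F l)" if "l \<in> I" for l
  proof -
    interpret prob_space "M l" by (rule prob_space)
    show ?thesis using f by (auto simp: F_def has_bochner_integral_iff)
  qed
  have ints: "integral\<^sup>L (M l) (F l) = (if l = j then a else 1)" for l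
  proof -
    interpret prob_space "M l" by (rule prob_space)
    show ?thesis using f by (auto simp: F_def has_bochner_integral_iff prob_space.prob_space[OF prob_space])
  qed
  have eq: "(\<lambda>x. (\<Prod>l\<in>I. F l (x l))) = (\<lambda>x. f (x j))"
  proof
    fix x
    have "(\<Prod>l\<in>I. F l (x l)) = (\<Prod>l\<in>I. if l = j then f (x j) else 1)"
      by (rule prod.cong) (auto simp: F_def)
    also have "\<dots> = f (x j)" using assms by (subst prod.delta) auto
    finally show "(\<Prod>l\<in>I. F l (x l)) = f (x j)" .
  qed
  have "integrable (Pi\<^sub>M I M) (\<lambda>x. (\<Prod>l\<in>I. F l (x l)))"
    by (rule product_integrable_prod[OF assms(1) int])
  moreover have "(\<integral>x. (\<Prod>l\<in>I. F l (x l)) \<partial>Pi\<^sub>M I M) = (\<Prod>l\<in>I. integral\<^sup>L (M l) (F l))"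
    by (rule product_integral_prod[OF assms(1) int])
  moreover have "(\<Prod>l\<in>I. integral\<^sup>L (M l) (F l)) = a"
    unfolding ints using assms by (subst prod.delta) auto
  ultimately show ?thesis unfolding eq by (simp add: has_bochner_integral_iff)
qed

lemma quad_gauss:
  fixes \<mu> v b :: "'i \<Rightarrow> real"
  assumes I: "finite I" and v: "\<And>j. j \<in> I \<Longrightarrow> v j \<ge> 0"
  shows "has_bochner_integral (Pi\<^sub>M I (\<lambda>j. normal_measure (\<mu> j) (v j)))
     (\<lambda>x. ((\<Sum>j\<in>I. b j * (x j - \<mu> j)) + e)^2) ((\<Sum>j\<in>I. (b j)^2 * v j) + e^2)"
proof -
  interpret product_prob_space "\<lambda>j. normal_measure (\<mu> j) (v j)" by (rule nm_pps)
  let ?M = "Pi\<^sub>M I (\<lambda>j. normal_measure (\<mu> j) (v j))"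
  interpret P: prob_space ?M by (rule prob_space_PiM) (rule nm_prob)
  have pair: "has_bochner_integral ?M (\<lambda>x. b j * b k * ((x j - \<mu> j) * (x k - \<mu> k)))
      (b j * b k * (if j = k then v j else 0))" if "j \<in> I" "k \<in> I" for j k
  proof (cases "j = k")
    case True
    have "has_bochner_integral ?M (\<lambda>x. (x j - \<mu> j)^2) (v j)"
      by (rule hbi_one[OF I that(1) nm_mom2[OF v[OF that(1)]]])
    then show ?thesis using True by (auto simp: power2_eq_square)
  next
    case False
    have "has_bochner_integral ?M (\<lambda>x. (x j - \<mu> j) * (x k - \<mu> k)) (0 * 0)"
      by (rule hbi_two[OF I that False nm_mom1 nm_mom1])
    from has_bochner_integral_mult_right[OF this, of "b j * b k"] show ?thesis using False by simp
  qed
  have lin: "has_bochner_integral ?M (\<lambda>x. 2 * e * (b j * (x j - \<mu> j))) 0" if "j \<in> I" for j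
    using has_bochner_integral_mult_right[OF hbi_one[OF I that nm_mom1], of "2 * e * b j"]
    by (simp add: mult.assoc)
  have expand: "((\<Sum>j\<in>I. b j * (x j - \<mu> j)) + e)^2 =
     (\<Sum>j\<in>I. \<Sum>k\<in>I. b j * b k * ((x j - \<mu> j) * (x k - \<mu> k))) + (\<Sum>j\<in>I. 2 * e * (b j * (x j - \<mu> j))) + e^2" for x
    by (simp add: power2_eq_square algebra_simps sum_distrib_left sum_distrib_right sum.distrib)
  have "has_bochner_integral ?M (\<lambda>x. (\<Sum>j\<in>I. \<Sum>k\<in>I. b j * b k * ((x j - \<mu> j) * (x k - \<mu> k))) + (\<Sum>j\<in>I. 2 * e * (b j * (x j - \<mu> j))) + e^2)
      ((\<Sum>j\<in>I. \<Sum>k\<in>I. b j * b k * (if j = k then v j else 0)) + (\<Sum>j\<in>I. 0) + e^2)"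
    by (intro has_bochner_integral_add has_bochner_integral_sum pair lin hbi_const_prob P.prob_space_axioms) auto
  moreover have "(\<Sum>j\<in>I. \<Sum>k\<in>I. b j * b k * (if j = k then v j else 0)) = (\<Sum>j\<in>I. (b j)^2 * v j)"
  proof (rule sum.cong[OF refl])
    fix j assume "j \<in> I"
    have "(\<Sum>k\<in>I. b j * b k * (if j = k then v j else 0)) = (\<Sum>k\<in>I. if k = j then b j * b j * v j else 0)"
      by (rule sum.cong) auto
    also have "\<dots> = (b j)^2 * v j" using \<open>j \<in> I\<close> I by (simp add: power2_eq_square)
    finally show "(\<Sum>k\<in>I. b j * b k * (if j = k then v j else 0)) = (b j)^2 * v j" .
  qed
  ultimately show ?thesis unfolding expand by simp
qed



lemma hbi_nn_integral:
  assumes "has_bochner_integral M f r" "\<And>x. 0 \<le> f x"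
  shows "(\<integral>\<^sup>+ x. ennreal (f x) \<partial>M) = ennreal r"
  using assms nn_integral_eq_integral[of M f] by (auto simp: has_bochner_integral_iff)

lemma risk_lin:
  assumes d: "\<forall>j<p. d j \<ge> 0"
  shows "risk p d (lin_est p C) \<theta> =
    ennreal (\<Sum>i<p. (\<Sum>j<p. (C i j)^2 * d j) + ((\<Sum>j<p. C i j * \<theta> j) - \<theta> i)^2)"
proof -
  have eq: "(lin_est p C x i - \<theta> i)^2 = ((\<Sum>j<p. C i j * (x j - \<theta> j)) + ((\<Sum>j<p. C i j * \<theta> j) - \<theta> i))^2" for x i
    by (simp add: lin_est_def algebra_simps sum_subtractf)
  have "has_bochner_integral (gauss_vec p \<theta> d) (\<lambda>x. \<Sum>i<p. (lin_est p C x i - \<theta> i)^2)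
      (\<Sum>i<p. (\<Sum>j<p. (C i j)^2 * d j) + ((\<Sum>j<p. C i j * \<theta> j) - \<theta> i)^2)"
    unfolding eq gauss_vec_def
    by (intro has_bochner_integral_sum quad_gauss) (use d in auto)
  then show ?thesis unfolding risk_def
    by (rule hbi_nn_integral) (simp add: sum_nonneg)
qed

lemma risk_diag:
  assumes d: "\<forall>j<p. d j \<ge> 0"
  shows "risk p d (\<lambda>x j. k j * x j) \<theta> = ennreal (\<Sum>j<p. (k j)^2 * d j + (k j - 1)^2 * (\<theta> j)^2)"
proof -
  have eq: "(k j * x j - \<theta> j)^2 = ((\<Sum>l<p. (if l = j then k j else 0) * (x l - \<theta> l)) + (k j - 1) * \<theta> j)^2"
    if "j < p" for x j
  proof -
    have "(\<Sum>l<p. (if l = j then k j else 0) * (x l - \<theta> l)) = (\<Sum>l<p. if l = j then k j * (x j - \<theta> j) else 0)"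
      by (rule sum.cong) auto
    also have "\<dots> = k j * (x j - \<theta> j)" using that by simp
    finally show ?thesis by (simp add: algebra_simps)
  qed
  have val: "(\<Sum>l<p. (if l = j then k j else 0)^2 * d l) + ((k j - 1) * \<theta> j)^2 = (k j)^2 * d j + (k j - 1)^2 * (\<theta> j)^2"
    if "j < p" for j
  proof -
    have "(\<Sum>l<p. (if l = j then k j else 0)^2 * d l) = (\<Sum>l<p. if l = j then (k j)^2 * d j else 0)"
      by (rule sum.cong) auto
    also have "\<dots> = (k j)^2 * d j" using that by simp
    finally show ?thesis by (simp add: power_mult_distrib)
  qed
  have "has_bochner_integral (gauss_vec p \<theta> d) (\<lambda>x. \<Sum>j<p. ((\<Sum>l<p. (if l = j then k j else 0) * (x l - \<theta> l)) + (k j - 1) * \<theta> j)^2)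
      (\<Sum>j<p. (\<Sum>l<p. (if l = j then k j else 0)^2 * d l) + ((k j - 1) * \<theta> j)^2)"
    unfolding gauss_vec_def
    by (intro has_bochner_integral_sum quad_gauss) (use d in auto)
  also have "(\<lambda>x. \<Sum>j<p. ((\<Sum>l<p. (if l = j then k j else 0) * (x l - \<theta> l)) + (k j - 1) * \<theta> j)^2)
       = (\<lambda>x. \<Sum>j<p. (k j * x j - \<theta> j)^2)"
    by (intro ext sum.cong) (simp_all add: eq)
  also have "(\<Sum>j<p. (\<Sum>l<p. (if l = j then k j else 0)^2 * d l) + ((k j - 1) * \<theta> j)^2)
      = (\<Sum>j<p. (k j)^2 * d j + (k j - 1)^2 * (\<theta> j)^2)"
    by (rule sum.cong) (simp_all add: val)
  finally show ?thesis unfolding risk_def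
    by (rule hbi_nn_integral) (simp add: sum_nonneg)
qed

lemma bayes_diag:
  assumes d: "\<forall>j<p. d j \<ge> 0" and lam: "\<forall>j<p. lam j \<ge> 0"
  shows "bayes_risk p d (\<lambda>x j. k j * x j) lam = ennreal (\<Sum>j<p. (k j)^2 * d j + (k j - 1)^2 * lam j)"
proof -
  have "has_bochner_integral (gauss_vec p (\<lambda>_. 0) lam) (\<lambda>\<theta>. \<Sum>j<p. (k j)^2 * d j + (k j - 1)^2 * (\<theta> j)^2)
      (\<Sum>j<p. (k j)^2 * d j + (k j - 1)^2 * lam j)"
  proof (intro has_bochner_integral_sum has_bochner_integral_add)
    fix j assume j: "j \<in> {..<p}"
    have P: "prob_space (gauss_vec p (\<lambda>_. 0) lam)" unfolding gauss_vec_def by (rule prob_space_PiM) (rule nm_prob)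
    show "has_bochner_integral (gauss_vec p (\<lambda>_. 0) lam) (\<lambda>x. (k j)^2 * d j) ((k j)^2 * d j)"
      by (rule hbi_const_prob) (rule P)
    have "has_bochner_integral (gauss_vec p (\<lambda>_. 0) lam) (\<lambda>x. (x j - 0)^2) (lam j)"
      unfolding gauss_vec_def using lam j
      by (intro product_prob_space.hbi_one[OF nm_pps[of "\<lambda>_. 0" lam, simplified]] nm_mom2[of "lam j" 0]) auto
    from has_bochner_integral_mult_right[OF this, of "(k j - 1)^2"]
    show "has_bochner_integral (gauss_vec p (\<lambda>_. 0) lam) (\<lambda>x. (k j - 1)^2 * (x j)^2) ((k j - 1)^2 * lam j)"
      by simp
  qed
  then show ?thesis unfolding bayes_risk_def risk_diag[OF d]
    by (rule hbi_nn_integral) (use d in \<open>auto intro!: sum_nonneg\<close>)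
qed

lemma sign_choice:
  fixes B :: "nat \<Rightarrow> nat \<Rightarrow> real"
  assumes lam: "\<forall>j<n. lam j \<ge> 0"
  shows "\<exists>\<theta>. (\<forall>j<n. (\<theta> j)^2 = lam j) \<and> (\<forall>j. j \<ge> n \<longrightarrow> \<theta> j = undefined) \<and>
     (\<Sum>j<n. \<Sum>i<p. (B i j)^2 * lam j) \<le> (\<Sum>i<p. (\<Sum>j<n. B i j * \<theta> j)^2)"
  using lam
proof (induction n)
  case 0
  show ?case by (rule exI[of _ "\<lambda>_. undefined"]) auto
next
  case (Suc n)
  then obtain \<theta> where th: "\<forall>j<n. (\<theta> j)^2 = lam j" "\<forall>j. j \<ge> n \<longrightarrow> \<theta> j = undefined"
    "(\<Sum>j<n. \<Sum>i<p. (B i j)^2 * lam j) \<le> (\<Sum>i<p. (\<Sum>j<n. B i j * \<theta> j)^2)" by auto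
  define S where "S i = (\<Sum>j<n. B i j * \<theta> j)" for i
  define s where "s = (\<Sum>i<p. S i * B i n)"
  define t where "t = (if s \<ge> 0 then sqrt (lam n) else - sqrt (lam n))"
  have ln: "lam n \<ge> 0" using Suc.prems by auto
  have t2: "t^2 = lam n" using ln by (simp add: t_def)
  have ts: "t * s \<ge> 0" using ln by (auto simp: t_def mult_nonneg_nonpos)
  define \<theta>' where "\<theta>' = \<theta>(n := t)"
  have inner: "(\<Sum>j<Suc n. B i j * \<theta>' j) = S i + B i n * t" for i
    by (simp add: \<theta>'_def S_def)
  have "(\<Sum>i<p. (\<Sum>j<Suc n. B i j * \<theta>' j)^2) = (\<Sum>i<p. (S i)^2 + 2 * t * (S i * B i n) + (B i n)^2 * t^2)"
    unfolding inner by (rule sum.cong) (auto simp: power2_eq_square algebra_simps)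
  also have "\<dots> = (\<Sum>i<p. (S i)^2) + 2 * (t * s) + (\<Sum>i<p. (B i n)^2 * lam n)"
    by (simp add: sum.distrib sum_distrib_left s_def t2 mult.assoc)
  finally have eq: "(\<Sum>i<p. (\<Sum>j<Suc n. B i j * \<theta>' j)^2) = (\<Sum>i<p. (S i)^2) + 2 * (t * s) + (\<Sum>i<p. (B i n)^2 * lam n)" .
  show ?case
  proof (intro exI[of _ \<theta>'] conjI allI impI)
    fix j assume "j < Suc n" then show "(\<theta>' j)^2 = lam j"
      using th(1) t2 by (cases "j = n") (auto simp: \<theta>'_def)
  next
    fix j assume "Suc n \<le> j" then show "\<theta>' j = undefined" using th(2) by (auto simp: \<theta>'_def)
  next
    show "(\<Sum>j<Suc n. \<Sum>i<p. (B i j)^2 * lam j) \<le> (\<Sum>i<p. (\<Sum>j<Suc n. B i j * \<theta>' j)^2)"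
      unfolding eq using th(3) ts by (simp add: S_def)
  qed
qed

lemma diag_le_double:
  fixes f :: "nat \<Rightarrow> nat \<Rightarrow> real"
  assumes "\<And>i j. f i j \<ge> 0"
  shows "(\<Sum>j<p. f j j) \<le> (\<Sum>i<p. \<Sum>j<p. f i j)"
proof -
  have "(\<Sum>j<p. f j j) \<le> (\<Sum>i<p. \<Sum>j<p. f i j)"
    by (intro sum_mono member_le_sum) (use assms in auto)
  then show ?thesis .
qed

lemma one_dim_bound:
  fixes c d l :: real assumes "d > 0" "l \<ge> 0"
  shows "d * l / (d + l) \<le> c^2 * d + (c - 1)^2 * l"
proof -
  have "(d + l) * (c^2 * d + (c - 1)^2 * l) - d * l = (c * (d + l) - l)^2"
    by (simp add: power2_eq_square algebra_simps)
  then have "d * l \<le> (d + l) * (c^2 * d + (c - 1)^2 * l)" by (metis diff_ge_0_iff_ge zero_le_power2)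
  then show ?thesis using assms by (simp add: divide_le_eq mult.commute)
qed

lemma linear_lower:
  assumes d: "\<forall>j<p. d j > 0" and lam: "\<forall>j<p. lam j \<ge> 0"
  shows "ennreal (\<Sum>j<p. d j * lam j / (d j + lam j)) \<le> max_risk p d (lin_est p C) lam"
proof -
  define B where "B i j = C i j - (if i = j then 1 else 0)" for i j
  obtain \<theta> where th: "\<forall>j<p. (\<theta> j)^2 = lam j" "\<forall>j. j \<ge> p \<longrightarrow> \<theta> j = undefined"
     "(\<Sum>j<p. \<Sum>i<p. (B i j)^2 * lam j) \<le> (\<Sum>i<p. (\<Sum>j<p. B i j * \<theta> j)^2)"
    using sign_choice[of p lam B p] lam by auto
  have thH: "\<theta> \<in> hyperrect p lam" using th(1,2) by (auto simp: hyperrect_def extensional_def)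
  have eB: "(\<Sum>j<p. C i j * \<theta> j) - \<theta> i = (\<Sum>j<p. B i j * \<theta> j)" if "i < p" for i
  proof -
    have "(\<Sum>j<p. B i j * \<theta> j) = (\<Sum>j<p. C i j * \<theta> j - (if i = j then \<theta> j else 0))"
      by (rule sum.cong) (auto simp: B_def algebra_simps)
    also have "\<dots> = (\<Sum>j<p. C i j * \<theta> j) - (\<Sum>j<p. if i = j then \<theta> j else 0)"
      by (rule sum_subtractf)
    also have "(\<Sum>j<p. if i = j then \<theta> j else 0) = \<theta> i" using that by simp
    finally show ?thesis by simp
  qed
  have "(\<Sum>j<p. d j * lam j / (d j + lam j)) \<le> (\<Sum>j<p. (C j j)^2 * d j + (B j j)^2 * lam j)"
    by (intro sum_mono) (use d lam in \<open>auto simp: B_def intro: one_dim_bound\<close>)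
  also have "\<dots> = (\<Sum>j<p. (C j j)^2 * d j) + (\<Sum>j<p. (B j j)^2 * lam j)" by (simp add: sum.distrib)
  also have "\<dots> \<le> (\<Sum>i<p. \<Sum>j<p. (C i j)^2 * (max 0 (d j))) + (\<Sum>j<p. \<Sum>i<p. (B i j)^2 * (max 0 (lam j)))"
  proof (intro add_mono)
    have "(\<Sum>j<p. (C j j)^2 * d j) = (\<Sum>j<p. (C j j)^2 * max 0 (d j))"
      using d by (intro sum.cong) auto
    also have "\<dots> \<le> (\<Sum>i<p. \<Sum>j<p. (C i j)^2 * (max 0 (d j)))"
      by (rule diag_le_double) auto
    finally show "(\<Sum>j<p. (C j j)^2 * d j) \<le> \<dots>" .
    have "(\<Sum>j<p. (B j j)^2 * lam j) = (\<Sum>j<p. (B j j)^2 * max 0 (lam j))"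
      using lam by (intro sum.cong) auto
    also have "\<dots> \<le> (\<Sum>i<p. \<Sum>j<p. (B j i)^2 * (max 0 (lam i)))"
      by (rule diag_le_double) auto
    finally show "(\<Sum>j<p. (B j j)^2 * lam j) \<le> \<dots>" .
  qed
  also have "\<dots> = (\<Sum>i<p. \<Sum>j<p. (C i j)^2 * d j) + (\<Sum>j<p. \<Sum>i<p. (B i j)^2 * lam j)"
    using d lam by (intro arg_cong2[where f="(+)"] sum.cong) auto
  also have "\<dots> \<le> (\<Sum>i<p. \<Sum>j<p. (C i j)^2 * d j) + (\<Sum>i<p. ((\<Sum>j<p. C i j * \<theta> j) - \<theta> i)^2)"
    using th(3) eB by simp
  also have "\<dots> = (\<Sum>i<p. (\<Sum>j<p. (C i j)^2 * d j) + ((\<Sum>j<p. C i j * \<theta> j) - \<theta> i)^2)"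
    by (simp add: sum.distrib)
  finally have "ennreal (\<Sum>j<p. d j * lam j / (d j + lam j)) \<le> risk p d (lin_est p C) \<theta>"
    using d by (subst risk_lin) (auto intro: ennreal_leI)
  also have "\<dots> \<le> max_risk p d (lin_est p C) lam"
    unfolding max_risk_def using thH by (rule SUP_upper)
  finally show ?thesis .
qed



lemma risk_cong: "(\<And>x j. j < p \<Longrightarrow> \<delta> x j = \<delta>' x j) \<Longrightarrow> risk p d \<delta> \<theta> = risk p d \<delta>' \<theta>"
  unfolding risk_def by (intro nn_integral_cong arg_cong[where f=ennreal] sum.cong) auto

lemma kval:
  fixes d l :: real assumes "d > 0" "l \<ge> 0"
  shows "(1 - d / (d + l))^2 * d + (1 - d / (d + l) - 1)^2 * l = d * l / (d + l)"
proof -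
  define s where "s = d + l"
  have s: "s > 0" using assms by (simp add: s_def)
  have e1: "1 - d / s = l / s" using s by (simp add: s_def field_simps)
  have e2: "1 - d / s - 1 = - (d / s)" by simp
  have "(l / s)^2 * d + (- (d / s))^2 * l = (d * l * s) / (s * s)"
    using s by (simp add: power2_eq_square add_divide_distrib s_def algebra_simps)
  also have "\<dots> = d * l / s" using s by simp
  finally have "(l / s)^2 * d + (- (d / s))^2 * l = d * l / s" .
  moreover have "l / s - 1 = - (d / s)" using e1 by simp
  ultimately show ?thesis unfolding s_def[symmetric] e1 by simp
qed

lemma linear_results:
  assumes d: "\<forall>j<p. d j > 0" and lam: "\<forall>j<p. lam j \<ge> 0"
  shows "bayes_risk p d (bayes_rule d lam) lam = ennreal (\<Sum>j<p. d j * lam j / (d j + lam j))"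
    and "minimax_linear_risk p d lam = ennreal (\<Sum>j<p. d j * lam j / (d j + lam j))"
proof -
  define k where "k j = 1 - d j / (d j + lam j)" for j
  have br: "bayes_rule d lam = (\<lambda>x j. k j * x j)" by (simp add: bayes_rule_def k_def fun_eq_iff)
  have d0: "\<forall>j<p. d j \<ge> 0" using d by (auto intro: less_imp_le)
  have kv: "(\<Sum>j<p. (k j)^2 * d j + (k j - 1)^2 * lam j) = (\<Sum>j<p. d j * lam j / (d j + lam j))"
  proof (rule sum.cong[OF refl])
    fix j assume "j \<in> {..<p}"
    then show "(k j)^2 * d j + (k j - 1)^2 * lam j = d j * lam j / (d j + lam j)"
      unfolding k_def by (intro kval) (use d lam in auto)
  qed
  show "bayes_risk p d (bayes_rule d lam) lam = ennreal (\<Sum>j<p. d j * lam j / (d j + lam j))"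
    unfolding br bayes_diag[OF d0 lam] kv ..
  define C where "C i j = (if i = j then k i else 0)" for i j :: nat
  have "max_risk p d (lin_est p C) lam \<le> ennreal (\<Sum>j<p. d j * lam j / (d j + lam j))"
    unfolding max_risk_def
  proof (rule SUP_least)
    fix \<theta> assume th: "\<theta> \<in> hyperrect p lam"
    have "risk p d (lin_est p C) \<theta> = risk p d (\<lambda>x j. k j * x j) \<theta>"
    proof (rule risk_cong)
      fix x j assume "j < p"
      have "lin_est p C x j = (\<Sum>l<p. if l = j then k j * x j else 0)"
        unfolding lin_est_def C_def by (rule sum.cong) auto
      then show "lin_est p C x j = k j * x j" using \<open>j < p\<close> by simp
    qed
    also have "\<dots> = ennreal (\<Sum>j<p. (k j)^2 * d j + (k j - 1)^2 * (\<theta> j)^2)" by (rule risk_diag[OF d0])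
    also have "\<dots> \<le> ennreal (\<Sum>j<p. (k j)^2 * d j + (k j - 1)^2 * lam j)"
      using th by (intro ennreal_leI sum_mono add_left_mono mult_left_mono) (auto simp: hyperrect_def)
    finally show "risk p d (lin_est p C) \<theta> \<le> ennreal (\<Sum>j<p. d j * lam j / (d j + lam j))" unfolding kv .
  qed
  moreover have "minimax_linear_risk p d lam \<le> max_risk p d (lin_est p C) lam"
    unfolding minimax_linear_risk_def by (rule INF_lower) simp
  moreover have "ennreal (\<Sum>j<p. d j * lam j / (d j + lam j)) \<le> minimax_linear_risk p d lam"
    unfolding minimax_linear_risk_def by (rule INF_greatest) (rule linear_lower[OF d lam])
  ultimately show "minimax_linear_risk p d lam = ennreal (\<Sum>j<p. d j * lam j / (d j + lam j))"
    by (metis antisym order_trans)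
qed



lemma nd_deriv:
  assumes "v > 0"
  shows "(normal_density \<mu> (sqrt v) has_real_derivative (- (t - \<mu>) / v * normal_density \<mu> (sqrt v) t)) (at t)"
proof -
  have d1: "((\<lambda>t. - ((t - \<mu>) * (t - \<mu>)) / (2 * v)) has_real_derivative (- (t - \<mu>) / v)) (at t)"
  proof -
    have "((\<lambda>t. (t - \<mu>) * (t - \<mu>)) has_real_derivative (1 * (t - \<mu>) + 1 * (t - \<mu>))) (at t)"
      using DERIV_mult[OF DERIV_diff[OF DERIV_ident DERIV_const[of \<mu>]] DERIV_diff[OF DERIV_ident DERIV_const[of \<mu>]]]
      by simp
    from DERIV_cdivide[OF DERIV_minus[OF this], of "2 * v"] show ?thesis
      by (rule DERIV_cong) (use assms in \<open>simp add: field_simps\<close>)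
  qed
  have "((\<lambda>t. 1 / sqrt (2 * pi * v) * exp (- ((t - \<mu>) * (t - \<mu>)) / (2 * v))) has_real_derivative
      1 / sqrt (2 * pi * v) * (exp (- ((t - \<mu>) * (t - \<mu>)) / (2 * v)) * (- (t - \<mu>) / v))) (at t)"
    by (intro DERIV_cmult DERIV_fun_exp d1)
  moreover have "normal_density \<mu> (sqrt v) = (\<lambda>t. 1 / sqrt (2 * pi * v) * exp (- ((t - \<mu>) * (t - \<mu>)) / (2 * v)))"
    using assms by (simp add: normal_density_def fun_eq_iff power2_eq_square)
  ultimately show ?thesis using assms by (simp add: field_simps)
qed

lemma nd_tendsto:
  assumes "v > 0"
  shows "(normal_density \<mu> (sqrt v) \<longlongrightarrow> 0) at_top" "(normal_density \<mu> (sqrt v) \<longlongrightarrow> 0) at_bot"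
proof -
  have eq: "normal_density \<mu> (sqrt v) = (\<lambda>t. 1 / sqrt (2 * pi * v) * exp (- ((t - \<mu>)^2) / (2 * v)))"
    using assms by (simp add: normal_density_def fun_eq_iff)
  show "(normal_density \<mu> (sqrt v) \<longlongrightarrow> 0) at_top" unfolding eq using assms by real_asymp
  show "(normal_density \<mu> (sqrt v) \<longlongrightarrow> 0) at_bot" unfolding eq using assms by real_asymp
qed

lemma stein1:
  fixes h h' :: "real \<Rightarrow> real"
  assumes v: "v > 0"
    and der: "\<And>t. (h has_real_derivative h' t) (at t)"
    and cont: "\<And>t. isCont h' t"
    and hb: "\<And>t. \<bar>h t\<bar> \<le> B" and h'b: "\<And>t. \<bar>h' t\<bar> \<le> B'"
  shows "integrable (normal_measure \<mu> v) (\<lambda>t. (t - \<mu>) * h t)"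
    and "integrable (normal_measure \<mu> v) h'"
    and "(\<integral>t. (t - \<mu>) * h t \<partial>normal_measure \<mu> v) = v * (\<integral>t. h' t \<partial>normal_measure \<mu> v)"
proof -
  define \<phi> where "\<phi> = normal_density \<mu> (sqrt v)"
  have sv: "0 < sqrt v" using v by simp
  have [measurable]: "\<phi> \<in> borel_measurable borel" by (simp add: \<phi>_def)
  have hc: "continuous_on UNIV h"
    using der by (intro continuous_at_imp_continuous_on) (auto intro: DERIV_isCont)
  have [measurable]: "h \<in> borel_measurable borel" by (rule borel_measurable_continuous_onI[OF hc])
  have [measurable]: "h' \<in> borel_measurable borel"
    by (rule borel_measurable_continuous_onI) (use cont in \<open>auto intro: continuous_at_imp_continuous_on\<close>)
  have N: "normal_measure \<mu> v = density lborel \<phi>" using v by (simp add: nm_pos \<phi>_def)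
  have i1: "integrable lborel (\<lambda>t. \<phi> t * \<bar>t - \<mu>\<bar>^1)" unfolding \<phi>_def by (rule integrable_normal_moment_abs[OF sv])
  have i0: "integrable lborel \<phi>" unfolding \<phi>_def by (rule integrable_normal_density[OF sv])
  have intA: "integrable lborel (\<lambda>t. \<phi> t * ((t - \<mu>) * h t))"
  proof (rule Bochner_Integration.integrable_bound[OF integrable_mult_right[OF i1, of B]])
    show "AE x in lborel. norm (\<phi> x * ((x - \<mu>) * h x)) \<le> norm (B * (\<phi> x * \<bar>x - \<mu>\<bar> ^ 1))"
    proof (rule AE_I2)
      fix x
      have "\<bar>\<phi> x * ((x - \<mu>) * h x)\<bar> = \<phi> x * \<bar>x - \<mu>\<bar> * \<bar>h x\<bar>" by (simp add: abs_mult \<phi>_def)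
      also have "\<dots> \<le> \<phi> x * \<bar>x - \<mu>\<bar> * B" by (intro mult_left_mono hb) (auto simp: \<phi>_def)
      finally show "norm (\<phi> x * ((x - \<mu>) * h x)) \<le> norm (B * (\<phi> x * \<bar>x - \<mu>\<bar> ^ 1))"
        by (simp add: mult_ac)
    qed
  qed simp
  have intB: "integrable lborel (\<lambda>t. \<phi> t * h' t)"
  proof (rule Bochner_Integration.integrable_bound[OF integrable_mult_right[OF i0, of B']])
    show "AE x in lborel. norm (\<phi> x * h' x) \<le> norm (B' * \<phi> x)"
    proof (rule AE_I2)
      fix x
      have "\<bar>\<phi> x * h' x\<bar> = \<phi> x * \<bar>h' x\<bar>" by (simp add: abs_mult \<phi>_def)
      also have "\<dots> \<le> \<phi> x * B'" by (intro mult_left_mono h'b) (auto simp: \<phi>_def)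
      finally show "norm (\<phi> x * h' x) \<le> norm (B' * \<phi> x)" by (simp add: mult_ac)
    qed
  qed simp
  show "integrable (normal_measure \<mu> v) (\<lambda>t. (t - \<mu>) * h t)"
    unfolding N by (subst integrable_density) (use intA in \<open>auto simp: \<phi>_def\<close>)
  show "integrable (normal_measure \<mu> v) h'"
    unfolding N by (subst integrable_density) (use intB in \<open>auto simp: \<phi>_def\<close>)
  define g where "g t = \<phi> t * h' t - (1 / v) * (\<phi> t * ((t - \<mu>) * h t))" for t
  have gint: "integrable lborel g" unfolding g_def using intA intB by auto
  have "(LBINT t=-\<infinity>..\<infinity>. g t) = 0 - 0"
  proof (rule interval_integral_FTC_integrable[where F="\<lambda>t. \<phi> t * h t"])
    show "- \<infinity> < (\<infinity>::ereal)" by simp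
    fix x :: real
    have "((\<lambda>t. \<phi> t * h t) has_real_derivative \<phi> x * h' x + (- (x - \<mu>) / v * \<phi> x) * h x) (at x)"
      unfolding \<phi>_def by (intro DERIV_mult' nd_deriv[OF v] der)
    also have "\<phi> x * h' x + (- (x - \<mu>) / v * \<phi> x) * h x = g x" by (simp add: g_def divide_inverse algebra_simps)
    finally show "((\<lambda>t. \<phi> t * h t) has_vector_derivative g x) (at x)"
      by (simp add: has_real_derivative_iff_has_vector_derivative)
    have "isCont \<phi> x" unfolding \<phi>_def using nd_deriv[OF v] by (rule DERIV_isCont)
    moreover have "isCont h x" using der by (rule DERIV_isCont)
    ultimately show "isCont g x" unfolding g_def using cont[of x] by (intro continuous_intros) auto
  next
    show "set_integrable lborel (einterval (- \<infinity>) \<infinity>) g" using gint by (simp add: set_integrable_def)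
  next
    have lim: "((\<lambda>t. \<phi> t * h t) \<longlongrightarrow> 0) F" if "(\<phi> \<longlongrightarrow> 0) F" for F
    proof (rule Lim_null_comparison[where g="\<lambda>t. B * \<phi> t"])
      show "\<forall>\<^sub>F x in F. norm (\<phi> x * h x) \<le> B * \<phi> x"
        by (rule always_eventually) (auto simp: abs_mult \<phi>_def intro: mult_left_mono[OF hb, simplified mult.commute])
      show "((\<lambda>t. B * \<phi> t) \<longlongrightarrow> 0) F" using tendsto_mult_left[OF that, of B] by simp
    qed
    show "(((\<lambda>t. \<phi> t * h t) \<circ> real_of_ereal) \<longlongrightarrow> 0) (at_right (- \<infinity>))"
      unfolding ereal_tendsto_simps by (rule lim) (unfold \<phi>_def, rule nd_tendsto[OF v])
    show "(((\<lambda>t. \<phi> t * h t) \<circ> real_of_ereal) \<longlongrightarrow> 0) (at_left \<infinity>)"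
      unfolding ereal_tendsto_simps by (rule lim) (unfold \<phi>_def, rule nd_tendsto[OF v])
  qed
  then have "integral\<^sup>L lborel g = 0"
    by (simp add: interval_lebesgue_integral_def set_lebesgue_integral_def)
  then have "integral\<^sup>L lborel (\<lambda>t. \<phi> t * h' t) - (1 / v) * integral\<^sup>L lborel (\<lambda>t. \<phi> t * ((t - \<mu>) * h t)) = 0"
    unfolding g_def using intA intB by simp
  then have eq: "integral\<^sup>L lborel (\<lambda>t. \<phi> t * ((t - \<mu>) * h t)) = v * integral\<^sup>L lborel (\<lambda>t. \<phi> t * h' t)"
    using v by (simp add: field_simps)
  show "(\<integral>t. (t - \<mu>) * h t \<partial>normal_measure \<mu> v) = v * (\<integral>t. h' t \<partial>normal_measure \<mu> v)"
    unfolding N by (subst (1 2) integral_density) (use eq in \<open>auto simp: \<phi>_def\<close>)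
qed



lemma nm_null_point:
  assumes "v > 0" shows "emeasure (normal_measure \<mu> v) {c} = 0"
proof -
  have "{c} \<in> null_sets (density lborel (normal_density \<mu> (sqrt v)))"
  proof -
    have h: "AE x in lborel. x \<in> {c} \<longrightarrow> normal_density \<mu> (sqrt v) x = 0"
      by (rule eventually_mono[OF AE_lborel_singleton[of c]]) simp
    show ?thesis using h by (simp add: null_sets_density_iff)
  qed
  then show ?thesis using assms by (simp add: nm_pos null_sets_def)
qed

lemma powr_int_01: "(\<integral>\<^sup>+ t. ennreal (indicator {0..1} t * t powr (-2/3)) \<partial>lborel) = ennreal 3"
proof -
  have "((\<lambda>x::real. x powr (-2/3)) has_integral (1 powr (-2/3+1) / (-2/3+1))) {0..1}"
    by (rule has_integral_powr_from_0) auto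
  then have "((\<lambda>x::real. x powr (-2/3)) has_integral 3) {0..1}" by simp
  then have "((\<lambda>x::real. if x \<in> {0..1} then x powr (-2/3) else 0) has_integral 3) UNIV"
    by (subst has_integral_restrict_UNIV)
  then have "((\<lambda>x::real. indicator {0..1} x * x powr (-2/3)) has_integral 3) UNIV"
    by (rule has_integral_eq[rotated]) (simp add: indicator_def)
  then show ?thesis
    by (intro nn_integral_has_integral_lborel) (auto simp: indicator_def)
qed

lemma powr_int_sym: "(\<integral>\<^sup>+ t. ennreal (indicator {-1..1} t * \<bar>t\<bar> powr (-2/3)) \<partial>lborel) < \<infinity>"
proof -
  let ?f = "\<lambda>t::real. ennreal (indicator {0..1} t * t powr (-2/3))"
  have m: "?f \<in> borel_measurable borel" by measurable
  have "(\<integral>\<^sup>+ t. ennreal (indicator {-1..1} t * \<bar>t\<bar> powr (-2/3)) \<partial>lborel)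
      \<le> (\<integral>\<^sup>+ t. ?f t + ?f (- t) \<partial>lborel)"
  proof (rule nn_integral_mono)
    fix t :: real
    show "ennreal (indicator {-1..1} t * \<bar>t\<bar> powr (-2/3)) \<le> ?f t + ?f (- t)"
    proof (cases "t \<ge> 0")
      case True then show ?thesis by (auto simp: indicator_def intro: add_increasing2)
    next
      case False then show ?thesis by (auto simp: indicator_def intro: add_increasing)
    qed
  qed
  also have "\<dots> = (\<integral>\<^sup>+ t. ?f t \<partial>lborel) + (\<integral>\<^sup>+ t. ?f (- t) \<partial>lborel)"
    by (rule nn_integral_add) auto
  also have "(\<integral>\<^sup>+ t. ?f (- t) \<partial>lborel) = (\<integral>\<^sup>+ t. ?f t \<partial>lborel)"
    using nn_integral_real_affine[OF m, of "-1" 0] by simp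
  finally have "(\<integral>\<^sup>+ t. ennreal (indicator {-1..1} t * \<bar>t\<bar> powr (-2/3)) \<partial>lborel) \<le> 6"
    using powr_int_01 by simp
  then show ?thesis by (rule le_less_trans) simp
qed

lemma nd_bound: assumes "v > 0" shows "normal_density \<mu> (sqrt v) t \<le> 1 / sqrt (2 * pi * v)"
proof -
  have pv: "0 \<le> pi * v" by (rule mult_nonneg_nonneg) (use assms in auto)
  have "exp (- ((t - \<mu>)^2 / (2 * v))) \<le> 1" using assms by simp
  then have "1 / sqrt (2 * pi * v) * exp (- ((t - \<mu>)^2 / (2 * v))) \<le> 1 / sqrt (2 * pi * v) * 1"
    by (intro mult_left_mono) (use pv in auto)
  then show ?thesis using assms by (simp add: normal_density_def)
qed

lemma gpow_finite:
  assumes v: "v > 0" and al: "\<alpha> \<noteq> 0"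
  shows "(\<integral>\<^sup>+ t. (if t = 0 then \<infinity> else ennreal (\<bar>\<alpha> * t\<bar> powr (-2/3))) \<partial>normal_measure \<mu> v) < \<infinity>"
proof -
  define \<phi> where "\<phi> = normal_density \<mu> (sqrt v)"
  define K where "K = 1 / sqrt (2 * pi * v)"
  define A where "A = \<bar>\<alpha>\<bar> powr (-2/3)"
  have [measurable]: "\<phi> \<in> borel_measurable borel" by (simp add: \<phi>_def)
  have "(\<integral>\<^sup>+ t. (if t = 0 then \<infinity> else ennreal (\<bar>\<alpha> * t\<bar> powr (-2/3))) \<partial>normal_measure \<mu> v)
     = (\<integral>\<^sup>+ t. ennreal (\<phi> t) * (if t = 0 then \<infinity> else ennreal (\<bar>\<alpha> * t\<bar> powr (-2/3))) \<partial>lborel)"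
    using v by (simp add: nm_pos nn_integral_density \<phi>_def)
  also have "\<dots> = (\<integral>\<^sup>+ t. ennreal (\<phi> t * (A * \<bar>t\<bar> powr (-2/3))) \<partial>lborel)"
  proof (rule nn_integral_cong_AE)
    show "AE t in lborel. ennreal (\<phi> t) * (if t = 0 then \<infinity> else ennreal (\<bar>\<alpha> * t\<bar> powr (-2/3))) = ennreal (\<phi> t * (A * \<bar>t\<bar> powr (-2/3)))"
      using AE_lborel_singleton[of 0]
    proof eventually_elim
      case (elim t)
      then show ?case by (simp add: A_def abs_mult powr_mult ennreal_mult'[symmetric] \<phi>_def mult_ac)
    qed
  qed
  also have "\<dots> \<le> (\<integral>\<^sup>+ t. ennreal (A * K) * ennreal (indicator {-1..1} t * \<bar>t\<bar> powr (-2/3)) + ennreal A * ennreal (\<phi> t) \<partial>lborel)"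
  proof (rule nn_integral_mono)
    fix t :: real
    have pv: "0 \<le> pi * v" by (rule mult_nonneg_nonneg) (use v in auto)
    have A0: "A \<ge> 0" "K \<ge> 0" using pv by (auto simp: A_def K_def)
    have p0: "\<phi> t \<ge> 0" by (simp add: \<phi>_def)
    have pK: "\<phi> t \<le> K" unfolding \<phi>_def K_def by (rule nd_bound[OF v])
    have "\<phi> t * (A * \<bar>t\<bar> powr (-2/3)) \<le> A * K * (indicator {-1..1} t * \<bar>t\<bar> powr (-2/3)) + A * \<phi> t"
    proof (cases "\<bar>t\<bar> \<le> 1")
      case True
      then have "\<phi> t * (A * \<bar>t\<bar> powr (-2/3)) \<le> K * (A * \<bar>t\<bar> powr (-2/3))"
        by (intro mult_right_mono pK) (use A0 in auto)
      also have "\<dots> \<le> A * K * (indicator {-1..1} t * \<bar>t\<bar> powr (-2/3)) + A * \<phi> t"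
        using True A0 p0 by (auto simp: indicator_def mult_ac)
      finally show ?thesis .
    next
      case False
      then have "\<bar>t\<bar> powr (-2/3) \<le> 1"
      proof -
        have "1 \<le> \<bar>t\<bar> powr (2/3)" by (rule ge_one_powr_ge_zero) (use False in auto)
        then show ?thesis by (simp add: powr_minus_divide divide_le_eq)
      qed
      then have "\<phi> t * (A * \<bar>t\<bar> powr (-2/3)) \<le> \<phi> t * (A * 1)"
        by (intro mult_left_mono) (use A0 p0 in auto)
      also have "\<dots> \<le> A * K * (indicator {-1..1} t * \<bar>t\<bar> powr (-2/3)) + A * \<phi> t"
        using A0 p0 by (auto simp: indicator_def mult_ac)
      finally show ?thesis .
    qed
    then show "ennreal (\<phi> t * (A * \<bar>t\<bar> powr (-2/3))) \<le> ennreal (A * K) * ennreal (indicator {-1..1} t * \<bar>t\<bar> powr (-2/3)) + ennreal A * ennreal (\<phi> t)"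
      using A0 p0 by (simp add: ennreal_mult'[symmetric] ennreal_plus[symmetric] ennreal_leI del: ennreal_plus)
  qed
  also have "\<dots> = ennreal (A * K) * (\<integral>\<^sup>+ t. ennreal (indicator {-1..1} t * \<bar>t\<bar> powr (-2/3)) \<partial>lborel) + ennreal A * (\<integral>\<^sup>+ t. ennreal (\<phi> t) \<partial>lborel)"
    by (subst nn_integral_add) (auto simp: nn_integral_cmult)
  also have "(\<integral>\<^sup>+ t. ennreal (\<phi> t) \<partial>lborel) = 1"
  proof -
    have "0 < sqrt v" using v by simp
    then show ?thesis unfolding \<phi>_def
      by (subst nn_integral_eq_integral) (auto intro: integrable_normal_density)
  qed
  also have "ennreal (A * K) * (\<integral>\<^sup>+ t. ennreal (indicator {-1..1} t * \<bar>t\<bar> powr (-2/3)) \<partial>lborel) + ennreal A * 1 < \<infinity>"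
    using powr_int_sym by (simp add: ennreal_mult_less_top)
  finally show ?thesis .
qed



lemma ae_coord:
  assumes I: "finite I" and k: "k \<in> I" and v: "v k > 0"
  shows "AE x in Pi\<^sub>M I (\<lambda>j. normal_measure (\<mu> j) (v j)). x k \<noteq> c"
proof -
  interpret product_prob_space "\<lambda>j. normal_measure (\<mu> j) (v j)" by (rule nm_pps)
  define A where "A i = (if i = k then {c} else UNIV)" for i :: 'a
  show ?thesis
  proof (rule AE_I[where N="Pi\<^sub>E I A"])
    show "{x \<in> space (Pi\<^sub>M I (\<lambda>j. normal_measure (\<mu> j) (v j))). \<not> x k \<noteq> c} \<subseteq> Pi\<^sub>E I A"
      by (auto simp: space_PiM A_def PiE_iff extensional_def)
    have "emeasure (Pi\<^sub>M I (\<lambda>j. normal_measure (\<mu> j) (v j))) (Pi\<^sub>E I A) = (\<Prod>i\<in>I. emeasure (normal_measure (\<mu> i) (v i)) (A i))"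
      by (rule emeasure_PiM[OF I]) (auto simp: A_def)
    also have "\<dots> = 0"
      using I k nm_null_point[OF v, of "\<mu> k" c] by (auto simp: A_def)
    finally show "emeasure (Pi\<^sub>M I (\<lambda>j. normal_measure (\<mu> j) (v j))) (Pi\<^sub>E I A) = 0" .
    show "Pi\<^sub>E I A \<in> sets (Pi\<^sub>M I (\<lambda>j. normal_measure (\<mu> j) (v j)))"
      by (rule sets_PiM_I_finite[OF I]) (auto simp: A_def)
  qed
qed

lemma prod_three:
  fixes f :: "'a \<Rightarrow> 'b::comm_monoid_mult"
  assumes I: "finite I" and k: "k1 \<in> I" "k2 \<in> I" "k3 \<in> I" and dist: "k1 \<noteq> k2" "k1 \<noteq> k3" "k2 \<noteq> k3"
    and one: "\<And>l. l \<in> I \<Longrightarrow> l \<noteq> k1 \<Longrightarrow> l \<noteq> k2 \<Longrightarrow> l \<noteq> k3 \<Longrightarrow> f l = 1"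
  shows "prod f I = f k1 * f k2 * f k3"
proof -
  have "prod f {k1, k2, k3} = prod f I"
    by (rule prod.mono_neutral_left) (use I k one in auto)
  then show ?thesis using dist by (simp add: mult_ac)
qed

lemma three_pow_bound:
  fixes u1 u2 u3 :: real
  assumes "u1 > 0" "u2 > 0" "u3 > 0"
  shows "1 / (u1^2 + u2^2 + u3^2) \<le> u1 powr (-2/3) * u2 powr (-2/3) * u3 powr (-2/3)"
proof -
  define m where "m = max u1 (max u2 u3)"
  have m0: "m > 0" using assms by (simp add: m_def)
  have b: "u powr (2/3) \<le> m powr (2/3)" if "u > 0" "u \<le> m" for u
    by (rule powr_mono2) (use that in auto)
  have "u1 powr (2/3) * u2 powr (2/3) * u3 powr (2/3) \<le> m powr (2/3) * m powr (2/3) * m powr (2/3)"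
    using assms by (intro mult_mono b) (auto simp: m_def)
  also have "\<dots> = m powr 2" by (simp add: powr_add[symmetric])
  also have "\<dots> = m^2" using m0 by (simp add: powr_numeral)
  also have "\<dots> \<le> u1^2 + u2^2 + u3^2"
    using assms by (auto simp: m_def max_def)
  finally have le: "u1 powr (2/3) * u2 powr (2/3) * u3 powr (2/3) \<le> u1^2 + u2^2 + u3^2" .
  have pos: "0 < u1 powr (2/3) * u2 powr (2/3) * u3 powr (2/3)" using assms by simp
  have "1 / (u1^2 + u2^2 + u3^2) \<le> 1 / (u1 powr (2/3) * u2 powr (2/3) * u3 powr (2/3))"
    by (rule divide_left_mono[OF le]) (use pos assms in \<open>auto intro!: mult_pos_pos add_pos_pos\<close>)
  also have "\<dots> = u1 powr (-2/3) * u2 powr (-2/3) * u3 powr (-2/3)"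
    by (simp add: powr_minus_divide)
  finally show ?thesis .
qed

lemma invQ_int:
  fixes a :: "'a \<Rightarrow> real"
  assumes I: "finite I" and k: "k1 \<in> I" "k2 \<in> I" "k3 \<in> I" and dist: "k1 \<noteq> k2" "k1 \<noteq> k3" "k2 \<noteq> k3"
    and a: "a k1 \<noteq> 0" "a k2 \<noteq> 0" "a k3 \<noteq> 0" and v: "v k1 > 0" "v k2 > 0" "v k3 > 0"
  shows "integrable (Pi\<^sub>M I (\<lambda>j. normal_measure (\<mu> j) (v j))) (\<lambda>x. 1 / (\<Sum>k\<in>I. (a k * x k)^2))"
proof -
  interpret product_prob_space "\<lambda>j. normal_measure (\<mu> j) (v j)" by (rule nm_pps)
  let ?M = "Pi\<^sub>M I (\<lambda>j. normal_measure (\<mu> j) (v j))"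
  define g where "g l t = (if t = 0 then \<infinity> else ennreal (\<bar>a l * t\<bar> powr (-2/3)))" for l t
  define G where "G l t = (if l = k1 \<or> l = k2 \<or> l = k3 then g l t else 1)" for l t
  have gm[measurable]: "g l \<in> borel_measurable borel" for l unfolding g_def by measurable
  have Gm: "G l \<in> borel_measurable (normal_measure (\<mu> l) (v l))" for l
    unfolding G_def by (cases "l = k1 \<or> l = k2 \<or> l = k3") (auto simp: measurable_cong_sets[OF nm_sets refl])
  have g0: "a l \<noteq> 0 \<Longrightarrow> g l t \<noteq> 0" for l t by (auto simp: g_def)
  have bound: "ennreal (1 / (\<Sum>k\<in>I. (a k * x k)^2)) \<le> g k1 (x k1) * g k2 (x k2) * g k3 (x k3)" for x
  proof (cases "x k1 = 0 \<or> x k2 = 0 \<or> x k3 = 0")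
    case True
    then have "g k1 (x k1) * g k2 (x k2) * g k3 (x k3) = \<infinity>"
      using g0[OF a(1)] g0[OF a(2)] g0[OF a(3)] by (auto simp: g_def ennreal_mult_eq_top_iff)
    then show ?thesis by simp
  next
    case False
    define u1 u2 u3 where "u1 = \<bar>a k1 * x k1\<bar>" "u2 = \<bar>a k2 * x k2\<bar>" "u3 = \<bar>a k3 * x k3\<bar>"
    have u: "u1 > 0" "u2 > 0" "u3 > 0" using False a by (auto simp: u1_u2_u3_def)
    have "u1^2 + u2^2 + u3^2 = (\<Sum>k\<in>{k1,k2,k3}. (a k * x k)^2)"
      using dist by (simp add: u1_u2_u3_def)
    also have "\<dots> \<le> (\<Sum>k\<in>I. (a k * x k)^2)"
      by (rule sum_mono2) (use I k in auto)
    finally have le: "u1^2 + u2^2 + u3^2 \<le> (\<Sum>k\<in>I. (a k * x k)^2)" .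
    have "1 / (\<Sum>k\<in>I. (a k * x k)^2) \<le> 1 / (u1^2 + u2^2 + u3^2)"
    proof (rule divide_left_mono[OF le])
      have "0 < u1^2 + u2^2 + u3^2" using u by (intro add_pos_pos) auto
      then show "0 < (\<Sum>k\<in>I. (a k * x k)^2) * (u1^2 + u2^2 + u3^2)" using le by simp
    qed simp
    also have "\<dots> \<le> u1 powr (-2/3) * u2 powr (-2/3) * u3 powr (-2/3)" by (rule three_pow_bound[OF u])
    finally have "ennreal (1 / (\<Sum>k\<in>I. (a k * x k)^2)) \<le> ennreal (u1 powr (-2/3) * u2 powr (-2/3) * u3 powr (-2/3))"
      by (rule ennreal_leI)
    also have "\<dots> = g k1 (x k1) * g k2 (x k2) * g k3 (x k3)"
      using False by (simp add: g_def u1_u2_u3_def ennreal_mult'')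
    finally show ?thesis .
  qed
  have "(\<integral>\<^sup>+ x. ennreal (norm (1 / (\<Sum>k\<in>I. (a k * x k)^2))) \<partial>?M) \<le> (\<integral>\<^sup>+ x. (\<Prod>l\<in>I. G l (x l)) \<partial>?M)"
  proof (rule nn_integral_mono)
    fix x
    have "(\<Prod>l\<in>I. G l (x l)) = G k1 (x k1) * G k2 (x k2) * G k3 (x k3)"
      by (rule prod_three[OF I k dist]) (auto simp: G_def)
    also have "\<dots> = g k1 (x k1) * g k2 (x k2) * g k3 (x k3)" by (simp add: G_def)
    finally show "ennreal (norm (1 / (\<Sum>k\<in>I. (a k * x k)^2))) \<le> (\<Prod>l\<in>I. G l (x l))"
      using bound[of x] by (simp add: sum_nonneg)
  qed
  also have "\<dots> = (\<Prod>l\<in>I. integral\<^sup>N (normal_measure (\<mu> l) (v l)) (G l))"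
    by (rule product_nn_integral_prod[OF I Gm])
  also have "\<dots> < \<top>"
  proof (subst less_top[symmetric], subst ennreal_prod_eq_top, safe)
    fix l assume "l \<in> I" and top: "integral\<^sup>N (normal_measure (\<mu> l) (v l)) (G l) = \<top>"
    show False
    proof (cases "l = k1 \<or> l = k2 \<or> l = k3")
      case True
      then have "G l = (\<lambda>t. if t = 0 then \<infinity> else ennreal (\<bar>a l * t\<bar> powr (-2/3)))"
        by (auto simp: G_def g_def fun_eq_iff)
      moreover have "a l \<noteq> 0" "v l > 0" using True a v by auto
      ultimately have "integral\<^sup>N (normal_measure (\<mu> l) (v l)) (G l) < \<infinity>"
        using gpow_finite[of "v l" "a l" "\<mu> l"] by simp
      then show False using top by simp
    next
      case False
      have "G l = (\<lambda>_. 1)" using False by (auto simp: G_def fun_eq_iff)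
      then have "integral\<^sup>N (normal_measure (\<mu> l) (v l)) (G l) = 1"
        using prob_space.emeasure_space_1[OF nm_prob, of "\<mu> l" "v l"] by simp
      then show False using top by simp
    qed
  qed
  finally show ?thesis
    by (subst integrable_iff_bounded) (auto simp: top.not_eq_extremum)
qed



lemma slice_stein:
  fixes a r :: real
  assumes v: "v > 0" and r: "r > 0"
  shows "(\<integral>t. (t - \<mu>) * (a * t / ((a * t)^2 + r)) \<partial>normal_measure \<mu> v)
       = v * (\<integral>t. a / ((a * t)^2 + r) - 2 * a^3 * t^2 / ((a * t)^2 + r)^2 \<partial>normal_measure \<mu> v)"
proof (rule stein1(3)[OF v])
  fix t :: real
  define D where "D = (a * t)^2 + r"
  have D: "D > 0" using r by (simp add: D_def add_nonneg_pos)
  have "((\<lambda>t. a * t / ((a * t)^2 + r)) has_real_derivative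
      ((a * 1) * ((a * t)^2 + r) - (a * t) * (2 * (a * t) * (a * 1))) / ((a * t)^2 + r)^2) (at t)"
    using D unfolding D_def
    by (intro DERIV_divide DERIV_cmult DERIV_ident DERIV_add DERIV_const derivative_eq_intros) (auto simp: power2_eq_square)
  moreover have "((a * 1) * ((a * t)^2 + r) - (a * t) * (2 * (a * t) * (a * 1))) / ((a * t)^2 + r)^2
     = a / ((a * t)^2 + r) - 2 * a^3 * t^2 / ((a * t)^2 + r)^2"
    using D unfolding D_def[symmetric] by (simp add: field_simps power2_eq_square power3_eq_cube)
  ultimately show "((\<lambda>t. a * t / ((a * t)^2 + r)) has_real_derivative
      a / ((a * t)^2 + r) - 2 * a^3 * t^2 / ((a * t)^2 + r)^2) (at t)" by simp
  show "isCont (\<lambda>t. a / ((a * t)^2 + r) - 2 * a^3 * t^2 / ((a * t)^2 + r)^2) t"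
    using D unfolding D_def by (intro continuous_intros) auto
  have zb: "\<bar>z\<bar> \<le> z^2 + 1" for z :: real
  proof -
    have "0 \<le> (\<bar>z\<bar> - 1)^2" by simp
    then have "0 \<le> \<bar>z\<bar>^2 - 2 * \<bar>z\<bar> + 1" by (simp add: power2_eq_square algebra_simps)
    then show ?thesis by (simp add: power2_abs)
  qed
  have "\<bar>a * t\<bar> \<le> (a * t)^2 + 1" by (rule zb)
  also have "\<dots> \<le> (1 + 1 / r) * D"
    using r D by (simp add: D_def field_simps)
  finally have "\<bar>a * t\<bar> / D \<le> 1 + 1 / r" using D by (simp add: divide_le_eq mult.commute)
  then show "\<bar>a * t / ((a * t)^2 + r)\<bar> \<le> 1 + 1 / r" using D by (simp add: D_def)
  have "(a * t)^2 \<le> D" using r by (simp add: D_def)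
  have e1: "2 * a^3 * t^2 / D^2 = 2 * a * ((a * t)^2 / D) * (1 / D)"
    using D by (simp add: power2_eq_square power3_eq_cube field_simps)
  have e2: "\<bar>2 * a * ((a * t)^2 / D) * (1 / D)\<bar> = 2 * \<bar>a\<bar> * ((a * t)^2 / D) * (1 / D)"
    using D by (simp add: abs_mult)
  have "\<bar>a / D - 2 * a^3 * t^2 / D^2\<bar> \<le> \<bar>a / D\<bar> + \<bar>2 * a^3 * t^2 / D^2\<bar>" by (rule abs_triangle_ineq4)
  also have "\<dots> = \<bar>a\<bar> / D + 2 * \<bar>a\<bar> * ((a * t)^2 / D) * (1 / D)"
    unfolding e1 e2 using D by simp
  also have "\<dots> \<le> \<bar>a\<bar> / r + 2 * \<bar>a\<bar> * 1 * (1 / r)"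
  proof (rule add_mono)
    have rD: "r \<le> D" by (simp add: D_def)
    show "\<bar>a\<bar> / D \<le> \<bar>a\<bar> / r" by (rule divide_left_mono[OF rD]) (use D r in auto)
    have b2: "(a * t)^2 / D \<le> 1" using \<open>(a * t)^2 \<le> D\<close> D by simp
    have b3: "1 / D \<le> 1 / r" by (rule divide_left_mono[OF rD]) (use D r in auto)
    show "2 * \<bar>a\<bar> * ((a * t)^2 / D) * (1 / D) \<le> 2 * \<bar>a\<bar> * 1 * (1 / r)"
      by (intro mult_mono mult_left_mono b2 b3) (use D in auto)
  qed
  finally show "\<bar>a / ((a * t)^2 + r) - 2 * a^3 * t^2 / ((a * t)^2 + r)^2\<bar> \<le> 3 * \<bar>a\<bar> / r"
    by (simp add: D_def)
qed



lemma stein_multi: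
  fixes a \<mu> v :: "'a \<Rightarrow> real"
  assumes I: "finite I" and j: "j \<in> I" and k: "k \<in> I" "k \<noteq> j" "a k \<noteq> 0" "v k > 0" and vj: "v j > 0"
    and int1: "integrable (Pi\<^sub>M I (\<lambda>j. normal_measure (\<mu> j) (v j))) (\<lambda>x. (x j - \<mu> j) * (a j * x j / (\<Sum>l\<in>I. (a l * x l)^2)))"
    and int2: "integrable (Pi\<^sub>M I (\<lambda>j. normal_measure (\<mu> j) (v j)))
        (\<lambda>x. a j / (\<Sum>l\<in>I. (a l * x l)^2) - 2 * a j^3 * (x j)^2 / (\<Sum>l\<in>I. (a l * x l)^2)^2)"
  shows "(\<integral>x. (x j - \<mu> j) * (a j * x j / (\<Sum>l\<in>I. (a l * x l)^2)) \<partial>Pi\<^sub>M I (\<lambda>j. normal_measure (\<mu> j) (v j)))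
       = v j * (\<integral>x. a j / (\<Sum>l\<in>I. (a l * x l)^2) - 2 * a j^3 * (x j)^2 / (\<Sum>l\<in>I. (a l * x l)^2)^2
                 \<partial>Pi\<^sub>M I (\<lambda>j. normal_measure (\<mu> j) (v j)))"
proof -
  interpret product_prob_space "\<lambda>j. normal_measure (\<mu> j) (v j)" by (rule nm_pps)
  define N where "N = (\<lambda>j. normal_measure (\<mu> j) (v j))"
  define J where "J = I - {j}"
  have IJ: "I = insert j J" and finJ: "finite J" and jJ: "j \<notin> J" and kJ: "k \<in> J"
    using I j k by (auto simp: J_def)
  have eqM: "Pi\<^sub>M I N = Pi\<^sub>M (insert j J) N" using IJ by simp
  have eqM': "Pi\<^sub>M I (\<lambda>j. normal_measure (\<mu> j) (v j)) = Pi\<^sub>M (insert j J) (\<lambda>j. normal_measure (\<mu> j) (v j))" using IJ by simp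
  define r where "r y = (\<Sum>l\<in>J. (a l * y l)^2)" for y
  have Qupd: "(\<Sum>l\<in>I. (a l * (y(j:=t)) l)^2) = (a j * t)^2 + r y" for y t
  proof -
    have "(\<Sum>l\<in>I. (a l * (y(j:=t)) l)^2) = (a j * t)^2 + (\<Sum>l\<in>J. (a l * (y(j:=t)) l)^2)"
      unfolding IJ using finJ jJ by simp
    also have "(\<Sum>l\<in>J. (a l * (y(j:=t)) l)^2) = r y"
      unfolding r_def using jJ by (intro sum.cong) auto
    finally show ?thesis .
  qed
  define F1 where "F1 y t = (t - \<mu> j) * (a j * t / ((a j * t)^2 + r y))" for y t
  define F2 where "F2 y t = a j / ((a j * t)^2 + r y) - 2 * a j^3 * t^2 / ((a j * t)^2 + r y)^2" for y t
  have sf: "sigma_finite_measure (N j)" unfolding N_def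
    using prob_space_imp_sigma_finite[OF nm_prob] .
  have Nsets[measurable_cong]: "sets (N l) = sets borel" for l by (simp add: N_def nm_sets)
  have [measurable]: "r \<in> borel_measurable (Pi\<^sub>M J N)" unfolding r_def
    by measurable
  have m1: "(\<lambda>y. \<integral>t. F1 y t \<partial>N j) \<in> borel_measurable (Pi\<^sub>M J N)"
    by (rule sigma_finite_measure.borel_measurable_lebesgue_integral[OF sf]) (unfold F1_def, measurable)
  have m2: "(\<lambda>y. \<integral>t. F2 y t \<partial>N j) \<in> borel_measurable (Pi\<^sub>M J N)"
    by (rule sigma_finite_measure.borel_measurable_lebesgue_integral[OF sf]) (unfold F2_def, measurable)
  have "(\<integral>x. (x j - \<mu> j) * (a j * x j / (\<Sum>l\<in>I. (a l * x l)^2)) \<partial>Pi\<^sub>M I N)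
      = (\<integral>y. (\<integral>t. ((y(j:=t)) j - \<mu> j) * (a j * (y(j:=t)) j / (\<Sum>l\<in>I. (a l * (y(j:=t)) l)^2)) \<partial>N j) \<partial>Pi\<^sub>M J N)"
    unfolding eqM unfolding N_def by (rule product_integral_insert[OF finJ jJ int1[unfolded eqM']])
  also have "\<dots> = (\<integral>y. (\<integral>t. F1 y t \<partial>N j) \<partial>Pi\<^sub>M J N)"
  proof (rule Bochner_Integration.integral_cong[OF refl])
    fix y
    show "(\<integral>t. ((y(j:=t)) j - \<mu> j) * (a j * (y(j:=t)) j / (\<Sum>l\<in>I. (a l * (y(j:=t)) l)^2)) \<partial>N j) = (\<integral>t. F1 y t \<partial>N j)"
    proof (rule Bochner_Integration.integral_cong[OF refl])
      fix t show "((y(j:=t)) j - \<mu> j) * (a j * (y(j:=t)) j / (\<Sum>l\<in>I. (a l * (y(j:=t)) l)^2)) = F1 y t"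
        by (simp only: Qupd fun_upd_same F1_def)
    qed
  qed
  also have "\<dots> = (\<integral>y. v j * (\<integral>t. F2 y t \<partial>N j) \<partial>Pi\<^sub>M J N)"
  proof (rule integral_cong_AE)
    show "(\<lambda>y. \<integral>t. F1 y t \<partial>N j) \<in> borel_measurable (Pi\<^sub>M J N)" by (rule m1)
    show "(\<lambda>y. v j * (\<integral>t. F2 y t \<partial>N j)) \<in> borel_measurable (Pi\<^sub>M J N)" using m2 by measurable
    show "AE y in Pi\<^sub>M J N. (\<integral>t. F1 y t \<partial>N j) = v j * (\<integral>t. F2 y t \<partial>N j)"
      using ae_coord[where I=J and k=k and v=v and \<mu>=\<mu> and c=0, OF finJ kJ k(4), folded N_def]
    proof eventually_elim
      case (elim y)
      have "0 < (a k * y k)^2" using elim k by simp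
      also have "\<dots> \<le> r y" unfolding r_def by (rule member_le_sum) (use kJ finJ in auto)
      finally have "r y > 0" .
      then show ?case unfolding F1_def F2_def N_def by (rule slice_stein[OF vj])
    qed
  qed
  also have "\<dots> = v j * (\<integral>y. (\<integral>t. F2 y t \<partial>N j) \<partial>Pi\<^sub>M J N)" by simp
  also have "(\<integral>y. (\<integral>t. F2 y t \<partial>N j) \<partial>Pi\<^sub>M J N) =
     (\<integral>y. (\<integral>t. a j / (\<Sum>l\<in>I. (a l * (y(j:=t)) l)^2) - 2 * a j^3 * ((y(j:=t)) j)^2 / (\<Sum>l\<in>I. (a l * (y(j:=t)) l)^2)^2 \<partial>N j) \<partial>Pi\<^sub>M J N)"
    by (rule Bochner_Integration.integral_cong[OF refl], rule Bochner_Integration.integral_cong[OF refl]) (simp only: Qupd fun_upd_same F2_def)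
  also have "\<dots> = (\<integral>x. a j / (\<Sum>l\<in>I. (a l * x l)^2) - 2 * a j^3 * (x j)^2 / (\<Sum>l\<in>I. (a l * x l)^2)^2 \<partial>Pi\<^sub>M I N)"
    unfolding eqM unfolding N_def by (rule product_integral_insert[OF finJ jJ int2[unfolded eqM'], symmetric])
  finally show ?thesis unfolding N_def .
qed



lemma sq_mom: assumes "v \<ge> 0"
  shows "has_bochner_integral (normal_measure \<mu> v) (\<lambda>t. t^2) (v + \<mu>^2)"
proof -
  have "has_bochner_integral (normal_measure \<mu> v) (\<lambda>t. (t - \<mu>)^2 + 2 * \<mu> * (t - \<mu>) + \<mu>^2) (v + 2 * \<mu> * 0 + \<mu>^2)"
    by (intro has_bochner_integral_add has_bochner_integral_mult_right nm_mom2[OF assms] nm_mom1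
        hbi_const_prob nm_prob)
  then show ?thesis by (simp add: power2_eq_square algebra_simps)
qed

lemma shrink_risk:
  fixes a d \<theta> :: "nat \<Rightarrow> real"
  assumes d: "\<forall>j<p. d j > 0" and a0: "\<forall>j<p. a j \<ge> 0"
    and k: "k1 < p" "k2 < p" "k3 < p" "k1 \<noteq> k2" "k1 \<noteq> k3" "k2 \<noteq> k3"
    and ak: "a k1 \<noteq> 0" "a k2 \<noteq> 0" "a k3 \<noteq> 0"
    and c0: "cstar p d a \<ge> 0" and m: "m > 0"
  shows "risk p d (shrink_est p d a) \<theta> \<le>
    ennreal ((\<Sum>j<p. d j) - (cstar p d a)^2 * (2 / m - (\<Sum>j<p. (a j)^2 * (d j + (\<theta> j)^2)) / m^2))
   \<and> 0 \<le> (\<Sum>j<p. d j) - (cstar p d a)^2 * (2 / m - (\<Sum>j<p. (a j)^2 * (d j + (\<theta> j)^2)) / m^2)"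
proof -
  define c where "c = cstar p d a"
  define Q where "Q x = (\<Sum>l<p. (a l * x l)^2)" for x :: "nat \<Rightarrow> real"
  define M where "M = gauss_vec p \<theta> d"
  define Mx where "Mx = Max ((\<lambda>j. d j * a j) ` {..<p})"
  have p0: "p > 0" using k by auto
  have cdef: "c = (\<Sum>j<p. d j * a j) - 2 * Mx" by (simp add: c_def cstar_def Mx_def)
  have Mx: "d j * a j \<le> Mx" if "j < p" for j
    unfolding Mx_def by (rule Max_ge) (use that in auto)
  have Mdef: "M = Pi\<^sub>M {..<p} (\<lambda>j. normal_measure (\<theta> j) (d j))" by (simp add: M_def gauss_vec_def)
  interpret P: prob_space M unfolding Mdef by (rule prob_space_PiM) (rule nm_prob)
  have Msets[measurable_cong]: "sets M = sets (Pi\<^sub>M {..<p} (\<lambda>j. borel))"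
    unfolding Mdef by (intro sets_PiM_cong) (auto simp: nm_sets)
  have [measurable]: "Q \<in> borel_measurable M" unfolding Q_def by measurable
  have Q0: "Q x \<ge> 0" for x unfolding Q_def by (auto intro: sum_nonneg)
  have aQ: "(a j * x j)^2 \<le> Q x" if "j < p" for j x
    unfolding Q_def by (rule member_le_sum) (use that in auto)
  have iQ: "integrable M (\<lambda>x. 1 / Q x)"
    unfolding Mdef Q_def
    by (rule invQ_int[of "{..<p}" k1 k2 k3]) (use k ak d in auto)
  have iy2: "has_bochner_integral M (\<lambda>x. (x j - \<theta> j)^2) (d j)" if "j < p" for j
    unfolding Mdef
    by (rule product_prob_space.hbi_one[OF nm_pps]) (use that d in \<open>auto intro: nm_mom2 less_imp_le\<close>)
  have ix2: "has_bochner_integral M (\<lambda>x. (x j)^2) (d j + (\<theta> j)^2)" if "j < p" for j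
    unfolding Mdef
    by (rule product_prob_space.hbi_one[OF nm_pps]) (use that d in \<open>auto intro: sq_mom less_imp_le\<close>)
  define T where "T j x = (x j - \<theta> j) * (a j * x j / Q x)" for j x
  define U where "U j x = a j / Q x - 2 * a j^3 * (x j)^2 / (Q x)^2" for j x
  have xj: "(\<lambda>x. x j) \<in> borel_measurable M" if "j < p" for j
    by (subst measurable_cong_sets[OF Msets refl]) (rule measurable_component_singleton, use that in auto)
  have iT: "integrable M (T j)" if "j < p" for j
  proof (rule Bochner_Integration.integrable_bound[where f="\<lambda>x. (x j - \<theta> j)^2 + 1 / Q x"])
    show "integrable M (\<lambda>x. (x j - \<theta> j)^2 + 1 / Q x)"
      using iy2[OF that] iQ by (auto simp: has_bochner_integral_iff)
    note xj[OF that, measurable]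
    show "T j \<in> borel_measurable M" unfolding T_def by measurable
    show "AE x in M. norm (T j x) \<le> norm ((x j - \<theta> j)^2 + 1 / Q x)"
    proof (rule AE_I2)
      fix x
      define y z where "y = x j - \<theta> j" and "z = a j * x j / Q x"
      have "z^2 \<le> 1 / Q x"
      proof (cases "Q x = 0")
        case True then show ?thesis by (simp add: z_def)
      next
        case False
        then have Qp: "Q x > 0" using Q0[of x] by simp
        have "z^2 = (a j * x j)^2 / (Q x)^2" by (simp add: z_def power_divide)
        also have "\<dots> \<le> Q x / (Q x)^2" by (rule divide_right_mono[OF aQ[OF that]]) simp
        also have "\<dots> = 1 / Q x" using Qp by (simp add: power2_eq_square)
        finally show ?thesis .
      qed
      moreover have "\<bar>y * z\<bar> \<le> y^2 + z^2"
      proof -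
        have "0 \<le> (\<bar>y\<bar> - \<bar>z\<bar>)^2" by simp
        moreover have "(\<bar>y\<bar> - \<bar>z\<bar>)^2 = y^2 + z^2 - 2 * (\<bar>y\<bar> * \<bar>z\<bar>)"
          by (simp add: power2_diff power2_abs mult.assoc)
        ultimately have "2 * (\<bar>y\<bar> * \<bar>z\<bar>) \<le> y^2 + z^2" by linarith
        moreover have "0 \<le> \<bar>y\<bar> * \<bar>z\<bar>" by simp
        ultimately have "\<bar>y\<bar> * \<bar>z\<bar> \<le> y^2 + z^2" by linarith
        then show ?thesis by (simp add: abs_mult)
      qed
      ultimately show "norm (T j x) \<le> norm ((x j - \<theta> j)^2 + 1 / Q x)"
        using Q0[of x] by (simp add: T_def y_def[symmetric] z_def[symmetric])
    qed
  qed
  have iU: "integrable M (U j)" if "j < p" for j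
  proof (rule Bochner_Integration.integrable_bound[where f="\<lambda>x. 3 * \<bar>a j\<bar> * (1 / Q x)"])
    show "integrable M (\<lambda>x. 3 * \<bar>a j\<bar> * (1 / Q x))" using integrable_mult_right[OF iQ, of "3 * \<bar>a j\<bar>"] by simp
    note xj[OF that, measurable]
    show "U j \<in> borel_measurable M" unfolding U_def by measurable
    show "AE x in M. norm (U j x) \<le> norm (3 * \<bar>a j\<bar> * (1 / Q x))"
    proof (rule AE_I2)
      fix x
      show "norm (U j x) \<le> norm (3 * \<bar>a j\<bar> * (1 / Q x))"
      proof (cases "Q x = 0")
        case True then show ?thesis by (simp add: U_def)
      next
        case False
        then have Qp: "Q x > 0" using Q0[of x] by simp
        have e: "2 * a j^3 * (x j)^2 / (Q x)^2 = 2 * a j * ((a j * x j)^2 / Q x) * (1 / Q x)"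
          using Qp by (simp add: power2_eq_square power3_eq_cube field_simps)
        have b: "(a j * x j)^2 / Q x \<le> 1" using aQ[OF that, of x] Qp by simp
        have "\<bar>U j x\<bar> \<le> \<bar>a j / Q x\<bar> + \<bar>2 * a j^3 * (x j)^2 / (Q x)^2\<bar>"
          unfolding U_def by (rule abs_triangle_ineq4)
        also have "\<dots> = \<bar>a j\<bar> * (1 / Q x) + 2 * \<bar>a j\<bar> * ((a j * x j)^2 / Q x) * (1 / Q x)"
          unfolding e using Qp by (simp add: abs_mult)
        also have "\<dots> \<le> \<bar>a j\<bar> * (1 / Q x) + 2 * \<bar>a j\<bar> * 1 * (1 / Q x)"
          by (intro add_left_mono mult_right_mono mult_left_mono b) (use Qp in auto)
        also have "\<dots> = 3 * \<bar>a j\<bar> * (1 / Q x)" by simp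
        finally show ?thesis using Qp by simp
      qed
    qed
  qed
  have stein: "integral\<^sup>L M (T j) = d j * integral\<^sup>L M (U j)" if "j < p" for j
  proof (cases "a j = 0")
    case True
    then have "T j = (\<lambda>_. 0)" "U j = (\<lambda>_. 0)" by (auto simp: T_def U_def fun_eq_iff)
    then show ?thesis by simp
  next
    case False
    obtain k where kk: "k < p" "k \<noteq> j" "a k \<noteq> 0" using k ak by metis
    have "integral\<^sup>L (Pi\<^sub>M {..<p} (\<lambda>j. normal_measure (\<theta> j) (d j))) (\<lambda>x. (x j - \<theta> j) * (a j * x j / (\<Sum>l\<in>{..<p}. (a l * x l)^2)))
       = d j * integral\<^sup>L (Pi\<^sub>M {..<p} (\<lambda>j. normal_measure (\<theta> j) (d j))) (\<lambda>x. a j / (\<Sum>l\<in>{..<p}. (a l * x l)^2) - 2 * a j^3 * (x j)^2 / (\<Sum>l\<in>{..<p}. (a l * x l)^2)^2)"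
      by (rule stein_multi[where k=k])
        (use that kk d iT[OF that] iU[OF that] in \<open>auto simp: Mdef T_def[abs_def] U_def[abs_def] Q_def[abs_def]\<close>)
    then show ?thesis by (simp add: Mdef[symmetric] T_def[abs_def] U_def[abs_def] Q_def[abs_def])
  qed
  have divb: "c * (1 / Q x) \<le> (\<Sum>j<p. d j * U j x)" for x
  proof (cases "Q x = 0")
    case True then show ?thesis by (simp add: U_def)
  next
    case False
    then have Qp: "Q x > 0" using Q0[of x] by simp
    have e: "d j * U j x = (d j * a j) / Q x - 2 * ((d j * a j) * (a j * x j)^2) / (Q x)^2" for j
      using Qp by (simp add: U_def power2_eq_square power3_eq_cube field_simps)
    have s1: "(\<Sum>j<p. (d j * a j) * (a j * x j)^2) \<le> (\<Sum>j<p. Mx * (a j * x j)^2)"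
      by (intro sum_mono mult_right_mono Mx) auto
    also have "\<dots> = Mx * Q x" by (simp add: Q_def sum_distrib_left)
    finally have s: "(\<Sum>j<p. (d j * a j) * (a j * x j)^2) \<le> Mx * Q x" .
    have "(\<Sum>j<p. d j * U j x) = (\<Sum>j<p. d j * a j) / Q x - 2 * (\<Sum>j<p. (d j * a j) * (a j * x j)^2) / (Q x)^2"
      unfolding e by (simp add: sum_subtractf sum_divide_distrib[symmetric] sum_distrib_left)
    also have "\<dots> \<ge> (\<Sum>j<p. d j * a j) / Q x - 2 * (Mx * Q x) / (Q x)^2"
      using s Qp by (intro diff_left_mono divide_right_mono) auto
    also have "(\<Sum>j<p. d j * a j) / Q x - 2 * (Mx * Q x) / (Q x)^2 = c * (1 / Q x)"
      using Qp by (simp add: cdef power2_eq_square field_simps)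
    finally show ?thesis .
  qed
  define IQ where "IQ = integral\<^sup>L M (\<lambda>x. 1 / Q x)"
  define S where "S = (\<Sum>j<p. integral\<^sup>L M (T j))"
  have S_ge: "c * IQ \<le> S"
  proof -
    have "S = (\<Sum>j<p. d j * integral\<^sup>L M (U j))" unfolding S_def by (intro sum.cong refl stein) auto
    also have "\<dots> = (\<Sum>j<p. integral\<^sup>L M (\<lambda>x. d j * U j x))" by simp
    also have "\<dots> = integral\<^sup>L M (\<lambda>x. \<Sum>j<p. d j * U j x)"
      by (rule Bochner_Integration.integral_sum[symmetric]) (use iU in auto)
    finally have "S = integral\<^sup>L M (\<lambda>x. \<Sum>j<p. d j * U j x)" .
    moreover have "c * IQ = integral\<^sup>L M (\<lambda>x. c * (1 / Q x))" unfolding IQ_def by (rule integral_mult_right_zero[symmetric])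
    moreover have "integral\<^sup>L M (\<lambda>x. c * (1 / Q x)) \<le> integral\<^sup>L M (\<lambda>x. \<Sum>j<p. d j * U j x)"
      by (intro Bochner_Integration.integral_mono divb integrable_mult_right iQ Bochner_Integration.integrable_sum) (use iU in auto)
    ultimately show ?thesis by simp
  qed
  have integrand: "(\<Sum>j<p. (shrink_est p d a x j - \<theta> j)^2) =
      (\<Sum>j<p. (x j - \<theta> j)^2) - 2 * c * (\<Sum>j<p. T j x) + c^2 * (1 / Q x)" for x
  proof -
    have sq: "(\<Sum>j<p. (a j * x j / Q x)^2) = 1 / Q x"
    proof -
      have "(\<Sum>j<p. (a j * x j / Q x)^2) = Q x / (Q x)^2"
        by (simp add: Q_def power_divide sum_divide_distrib)
      then show ?thesis by (simp add: power2_eq_square)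
    qed
    have "(\<Sum>j<p. (shrink_est p d a x j - \<theta> j)^2) =
        (\<Sum>j<p. (x j - \<theta> j)^2 - 2 * c * T j x + c^2 * (a j * x j / Q x)^2)"
    proof (intro sum.cong refl)
      fix j
      have alg: "(u - c * w - t)^2 = (u - t)^2 - 2 * c * ((u - t) * w) + c^2 * w^2" for u w t :: real
        by (simp add: power2_eq_square algebra_simps)
      have "shrink_est p d a x j = x j - c * (a j * x j / Q x)"
        by (simp add: shrink_est_def c_def Q_def)
      then show "(shrink_est p d a x j - \<theta> j)^2 = (x j - \<theta> j)^2 - 2 * c * T j x + c^2 * (a j * x j / Q x)^2"
        by (simp only: alg T_def)
    qed
    also have "\<dots> = (\<Sum>j<p. (x j - \<theta> j)^2) - 2 * c * (\<Sum>j<p. T j x) + c^2 * (\<Sum>j<p. (a j * x j / Q x)^2)"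
      by (simp add: sum.distrib sum_subtractf sum_distrib_left)
    finally show ?thesis unfolding sq .
  qed
  have hb: "has_bochner_integral M (\<lambda>x. \<Sum>j<p. (shrink_est p d a x j - \<theta> j)^2)
      ((\<Sum>j<p. d j) - 2 * c * S + c^2 * IQ)"
    unfolding integrand S_def IQ_def
    by (intro has_bochner_integral_add has_bochner_integral_diff has_bochner_integral_sum
        has_bochner_integral_mult_right iy2 has_bochner_integral_integrable iT iQ) auto
  have risk_eq: "risk p d (shrink_est p d a) \<theta> = ennreal ((\<Sum>j<p. d j) - 2 * c * S + c^2 * IQ)"
    unfolding risk_def M_def[symmetric] by (rule hbi_nn_integral[OF hb]) (simp add: sum_nonneg)
  \<comment> \<open>tangent line bound\<close>
  define EQ where "EQ = (\<Sum>j<p. (a j)^2 * (d j + (\<theta> j)^2))"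
  have hQ: "has_bochner_integral M Q EQ"
  proof -
    have "has_bochner_integral M (\<lambda>x. \<Sum>j<p. (a j)^2 * (x j)^2) EQ"
      unfolding EQ_def by (intro has_bochner_integral_sum has_bochner_integral_mult_right ix2) auto
    moreover have "Q = (\<lambda>x. \<Sum>j<p. (a j)^2 * (x j)^2)" by (simp add: Q_def[abs_def] power_mult_distrib)
    ultimately show ?thesis by simp
  qed
  have IQ_ge: "2 / m - EQ / m^2 \<le> IQ"
  proof -
    have "AE x in M. x k1 \<noteq> 0" unfolding Mdef by (rule ae_coord) (use k d in auto)
    then have ae: "AE x in M. 2 / m - Q x / m^2 \<le> 1 / Q x"
    proof eventually_elim
      case (elim x)
      have "0 < (a k1 * x k1)^2" using elim ak by simp
      also have "\<dots> \<le> Q x" by (rule aQ) (use k in auto)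
      finally have Qp: "Q x > 0" .
      have "1 / Q x - (2 / m - Q x / m^2) = (m - Q x)^2 / (Q x * m^2)"
        using Qp m by (simp add: field_simps power2_eq_square)
      also have "\<dots> \<ge> 0" using Qp m by simp
      finally show ?case by simp
    qed
    have "2 / m - EQ / m^2 = integral\<^sup>L M (\<lambda>x. 2 / m - Q x / m^2)"
      using hQ by (simp add: has_bochner_integral_iff P.prob_space)
    also have "\<dots> \<le> IQ" unfolding IQ_def
      by (rule integral_mono_AE[OF _ iQ ae]) (use hQ in \<open>auto simp: has_bochner_integral_iff\<close>)
    finally show ?thesis .
  qed
  have R0: "0 \<le> (\<Sum>j<p. d j) - 2 * c * S + c^2 * IQ"
  proof -
    have "integral\<^sup>L M (\<lambda>x. \<Sum>j<p. (shrink_est p d a x j - \<theta> j)^2) = (\<Sum>j<p. d j) - 2 * c * S + c^2 * IQ"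
      using hb by (rule has_bochner_integral_integral_eq)
    moreover have "0 \<le> integral\<^sup>L M (\<lambda>x. \<Sum>j<p. (shrink_est p d a x j - \<theta> j)^2)"
      by (rule Bochner_Integration.integral_nonneg) (simp add: sum_nonneg)
    ultimately show ?thesis by simp
  qed
  have "(\<Sum>j<p. d j) - 2 * c * S + c^2 * IQ \<le> (\<Sum>j<p. d j) - c^2 * IQ"
  proof -
    have "2 * c * (c * IQ) \<le> 2 * c * S" using S_ge c0 by (intro mult_left_mono) (auto simp: c_def)
    then show ?thesis by (simp add: power2_eq_square algebra_simps)
  qed
  also have "\<dots> \<le> (\<Sum>j<p. d j) - c^2 * (2 / m - EQ / m^2)"
    using IQ_ge by (intro diff_left_mono mult_left_mono) auto
  finally have fin: "(\<Sum>j<p. d j) - 2 * c * S + c^2 * IQ \<le> (\<Sum>j<p. d j) - c^2 * (2 / m - EQ / m^2)" .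
  show ?thesis unfolding risk_eq using fin R0 by (auto intro!: ennreal_leI simp: c_def EQ_def)
qed



lemma feasible_from_u:
  fixes d \<gamma> u :: "nat \<Rightarrow> real"
  assumes d: "\<forall>j<p. d j > 0" and g: "\<forall>j<p. \<gamma> j \<ge> 0"
    and u0: "\<forall>j<p. 0 \<le> u j" and um: "\<forall>j<p. u j \<le> m0" and j0: "j0 < p" "u j0 = m0"
    and D: "0 < (\<Sum>j<p. (u j)^2 / dstar d \<gamma> j)"
  defines "s \<equiv> sqrt ((\<Sum>j<p. dstar d \<gamma> j) / (\<Sum>j<p. (u j)^2 / dstar d \<gamma> j))"
  assumes T: "0 \<le> (\<Sum>j<p. dstar d \<gamma> j)"
  shows "feasibleA p d \<gamma> (\<lambda>j. s * u j / d j)"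
    and "cstar p d (\<lambda>j. s * u j / d j) = s * ((\<Sum>j<p. u j) - 2 * m0)"
    and "s^2 = (\<Sum>j<p. dstar d \<gamma> j) / (\<Sum>j<p. (u j)^2 / dstar d \<gamma> j)"
proof -
  have s0: "s \<ge> 0" unfolding s_def using D T by simp
  show s2: "s^2 = (\<Sum>j<p. dstar d \<gamma> j) / (\<Sum>j<p. (u j)^2 / dstar d \<gamma> j)"
    unfolding s_def using D T by simp
  have e: "(d j + \<gamma> j) * (s * u j / d j)^2 = s^2 * ((u j)^2 / dstar d \<gamma> j)" if "j < p" for j
  proof -
    have "d j > 0" "d j + \<gamma> j > 0" using d g that by (auto simp: add_pos_nonneg)
    then show ?thesis by (simp add: dstar_def field_simps power2_eq_square)
  qed
  have "(\<Sum>j<p. (d j + \<gamma> j) * (s * u j / d j)^2) = s^2 * (\<Sum>j<p. (u j)^2 / dstar d \<gamma> j)"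
    by (simp add: e sum_distrib_left)
  also have "\<dots> = (\<Sum>j<p. dstar d \<gamma> j)" using s2 D by simp
  finally show "feasibleA p d \<gamma> (\<lambda>j. s * u j / d j)"
    unfolding feasibleA_def using s0 u0 d by (auto intro!: divide_nonneg_pos mult_nonneg_nonneg)
  have du: "d j * (s * u j / d j) = s * u j" if "j < p" for j
  proof -
    have "d j \<noteq> 0" using d that by auto
    then show ?thesis by simp
  qed
  have sum: "(\<Sum>j<p. d j * (s * u j / d j)) = s * (\<Sum>j<p. u j)"
    unfolding sum_distrib_left by (rule sum.cong) (use du in auto)
  have mx: "Max ((\<lambda>j. d j * (s * u j / d j)) ` {..<p}) = s * m0"
  proof (rule Max_eqI)
    show "finite ((\<lambda>j. d j * (s * u j / d j)) ` {..<p})" by simp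
    show "y \<le> s * m0" if yin: "y \<in> (\<lambda>j. d j * (s * u j / d j)) ` {..<p}" for y
    proof -
      obtain j where j: "j < p" "y = d j * (s * u j / d j)" using yin by blast
      then have "y = s * u j" using du by simp
      also have "\<dots> \<le> s * m0" using um j s0 by (intro mult_left_mono) auto
      finally show ?thesis .
    qed
    show "s * m0 \<in> (\<lambda>j. d j * (s * u j / d j)) ` {..<p}"
      using j0 du by (auto intro!: image_eqI[of _ _ j0])
  qed
  show "cstar p d (\<lambda>j. s * u j / d j) = s * ((\<Sum>j<p. u j) - 2 * m0)"
    unfolding cstar_def sum mx by (simp add: algebra_simps)
qed

lemma dstar_pos: "d j > 0 \<Longrightarrow> \<gamma> j \<ge> 0 \<Longrightarrow> dstar d \<gamma> j > 0"
  by (simp add: dstar_def add_pos_nonneg)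

lemma opt_bound:
  fixes d \<gamma> a :: "nat \<Rightarrow> real"
  assumes p3: "p \<ge> 3"
    and dpos: "\<forall>j<p. d j > 0"
    and gnn: "\<forall>j<p. \<gamma> j \<ge> 0"
    and sorted: "\<forall>i j. i \<le> j \<and> j < p \<longrightarrow> dstar d \<gamma> j \<le> dstar d \<gamma> i"
    and a_max: "\<forall>b. feasibleA p d \<gamma> b \<longrightarrow> cstar p d b \<le> cstar p d a"
  defines "S4 \<equiv> dstar d \<gamma> 0 + dstar d \<gamma> 1 + dstar d \<gamma> 2 + (if p \<ge> 4 then dstar d \<gamma> 3 else 0)"
  shows "cstar p d a > 0"
    and "(\<Sum>j<p. dstar d \<gamma> j) * ((\<Sum>j<p. dstar d \<gamma> j) - S4) \<le> (cstar p d a)^2"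
proof -
  define w where "w j = dstar d \<gamma> j" for j
  define T where "T = (\<Sum>j<p. w j)"
  have wpos: "w j > 0" if "j < p" for j using dstar_pos dpos gnn that by (auto simp: w_def)
  have T0: "T > 0" unfolding T_def
  proof (rule sum_pos)
    have "0 \<in> {..<p}" using p3 by simp
    then show "{..<p} \<noteq> {}" by blast
  qed (use wpos in auto)
  have "cstar p d a > 0 \<and> T * (T - S4) \<le> (cstar p d a)^2"
  proof (cases "p \<ge> 5")
    case True
    define m0 where "m0 = w 4"
    define u where "u j = min (w j) m0" for j
    have m0p: "m0 > 0" using wpos True by (simp add: m0_def)
    have u0: "\<forall>j<p. 0 \<le> u j"
    proof (intro allI impI)
      fix j assume "j < p"
      then have "0 < w j" by (rule wpos)
      then show "0 \<le> u j" using m0p by (simp add: u_def)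
    qed
    have um: "\<forall>j<p. u j \<le> m0" by (auto simp: u_def)
    have uj0: "u 4 = m0" by (simp add: u_def m0_def)
    have ulow: "u j = m0" if "j < 4" for j
      using sorted[rule_format, of j 4] that True by (auto simp: u_def m0_def w_def)
    have uhigh: "u j = w j" if "4 \<le> j" "j < p" for j
      using sorted[rule_format, of 4 j] that by (auto simp: u_def m0_def w_def)
    have split: "(\<Sum>j<p. f j) = (\<Sum>j<4. f j) + (\<Sum>j\<in>{4..<p}. f j)" for f :: "nat \<Rightarrow> real"
    proof -
      have "(\<Sum>j<p. f j) = sum f {0..<p}" by (simp add: atLeast0LessThan)
      also have "\<dots> = sum f {0..<4} + sum f {4..<p}"
        by (rule sum.atLeastLessThan_concat[symmetric]) (use True in auto)
      also have "sum f {0..<4} = (\<Sum>j<4. f j)" by (simp add: atLeast0LessThan)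
      finally show ?thesis .
    qed
    define R where "R = (\<Sum>j\<in>{4..<p}. w j)"
    have R0: "R \<ge> 0" unfolding R_def
    proof (rule sum_nonneg)
      fix j assume "j \<in> {4..<p}" then show "0 \<le> w j" using wpos[of j] by auto
    qed
    have S4: "S4 = (\<Sum>j<4. w j)" using True by (simp add: S4_def w_def eval_nat_numeral)
    have TR: "T - S4 = R" unfolding T_def R_def S4 by (subst split) simp
    have sumu: "(\<Sum>j<p. u j) = 4 * m0 + R"
    proof -
      have "(\<Sum>j<4. u j) = 4 * m0" by (simp add: ulow)
      moreover have "(\<Sum>j\<in>{4..<p}. u j) = R" unfolding R_def by (intro sum.cong) (auto simp: uhigh)
      ultimately show ?thesis by (subst split) simp
    qed
    define D where "D = (\<Sum>j<p. (u j)^2 / dstar d \<gamma> j)"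
    have Dle: "D \<le> (\<Sum>j<p. u j)" unfolding D_def
    proof (rule sum_mono)
      fix j assume "j \<in> {..<p}"
      then have wj: "w j > 0" "u j \<le> w j" "0 \<le> u j" using wpos u0 by (auto simp: u_def)
      then have "(u j)^2 / w j \<le> u j * w j / w j"
        by (intro divide_right_mono) (auto simp: power2_eq_square intro: mult_left_mono)
      then show "(u j)^2 / dstar d \<gamma> j \<le> u j" using wj by (simp add: w_def)
    qed
    have Dpos: "D > 0"
    proof -
      have "0 < (u 4)^2 / dstar d \<gamma> 4" using uj0 m0p wpos[of 4] True by (simp add: w_def)
      also have "\<dots> \<le> D" unfolding D_def
      proof (rule member_le_sum)
        fix j assume "j \<in> {..<p} - {4}"
        then have "0 < dstar d \<gamma> j" using wpos[of j] by (auto simp: w_def)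
        then show "0 \<le> (u j)^2 / dstar d \<gamma> j" by simp
      qed (use True in auto)
      finally show ?thesis .
    qed
    define s where "s = sqrt ((\<Sum>j<p. dstar d \<gamma> j) / D)"
    have Tw: "(\<Sum>j<p. dstar d \<gamma> j) = T" by (simp add: T_def w_def)
    note F = feasible_from_u[OF dpos gnn u0 um _ uj0]
    have fe: "feasibleA p d \<gamma> (\<lambda>j. s * u j / d j)"
      and cs: "cstar p d (\<lambda>j. s * u j / d j) = s * ((\<Sum>j<p. u j) - 2 * m0)"
      and s2: "s^2 = T / D"
      using F[folded D_def s_def] True Dpos T0 Tw by auto
    define N where "N = 2 * m0 + R"
    have csN: "cstar p d (\<lambda>j. s * u j / d j) = s * N" using cs sumu by (simp add: N_def)
    have spos: "s > 0" using s2 T0 Dpos unfolding s_def by (simp add: Tw)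
    have Np: "N > 0" using m0p R0 by (simp add: N_def)
    have ca: "s * N \<le> cstar p d a" using a_max fe csN by auto
    have "T * R \<le> (s * N)^2"
    proof -
      have "R * D \<le> R * (4 * m0 + R)" using Dle sumu R0 by (intro mult_left_mono) auto
      also have "\<dots> \<le> N^2" by (simp add: N_def power2_eq_square algebra_simps m0p less_imp_le)
      finally have "R * D \<le> N^2" .
      then have "T * R \<le> T / D * N^2" using T0 Dpos by (simp add: field_simps)
      then show ?thesis using s2 by (simp add: power_mult_distrib)
    qed
    also have "\<dots> \<le> (cstar p d a)^2" using ca spos Np by (intro power_mono) auto
    finally have "T * (T - S4) \<le> (cstar p d a)^2" using TR by simp
    moreover have "0 < s * N" using spos Np by simp
    ultimately show ?thesis using ca by linarith
  next
    case False
    define m0 where "m0 = w (p - 1)"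
    define u where "u j = m0" for j :: nat
    have m0p: "m0 > 0" using wpos p3 by (simp add: m0_def)
    have u0: "\<forall>j<p. 0 \<le> u j" using m0p by (auto simp: u_def)
    have um: "\<forall>j<p. u j \<le> m0" by (auto simp: u_def)
    define D where "D = (\<Sum>j<p. (u j)^2 / dstar d \<gamma> j)"
    have Dpos: "D > 0" unfolding D_def
    proof (rule sum_pos)
      have "0 \<in> {..<p}" using p3 by simp
      then show "{..<p} \<noteq> {}" by blast
    qed (use wpos m0p in \<open>auto simp: u_def w_def\<close>)
    define s where "s = sqrt ((\<Sum>j<p. dstar d \<gamma> j) / D)"
    have Tw: "(\<Sum>j<p. dstar d \<gamma> j) = T" by (simp add: T_def w_def)
    have jp: "p - 1 < p" using p3 by simp
    have ujp: "u (p - 1) = m0" by (simp add: u_def)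
    note F = feasible_from_u[OF dpos gnn u0 um jp ujp]
    have fe: "feasibleA p d \<gamma> (\<lambda>j. s * u j / d j)"
      and cs: "cstar p d (\<lambda>j. s * u j / d j) = s * ((\<Sum>j<p. u j) - 2 * m0)"
      and s2: "s^2 = T / D"
      using F[folded D_def s_def] p3 Dpos T0 Tw by (auto simp: u_def)
    have spos: "s > 0" using s2 T0 Dpos unfolding s_def by (simp add: Tw)
    have "(\<Sum>j<p. u j) - 2 * m0 = (real p - 2) * m0" by (simp add: u_def algebra_simps)
    moreover have "(real p - 2) * m0 > 0" using p3 m0p by simp
    ultimately have "cstar p d (\<lambda>j. s * u j / d j) > 0" using cs spos by simp
    then have ca: "cstar p d a > 0" using a_max fe by (auto intro: order.strict_trans2)
    have "p = 3 \<or> p = 4" using p3 False by auto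
    then have "T = S4" by (auto simp: T_def S4_def w_def eval_nat_numeral)
    then show ?thesis using ca by simp
  qed
  then show "cstar p d a > 0" and "(\<Sum>j<p. dstar d \<gamma> j) * ((\<Sum>j<p. dstar d \<gamma> j) - S4) \<le> (cstar p d a)^2"
    by (auto simp: T_def w_def)
qed



lemma three_nonzero:
  fixes a d :: "nat \<Rightarrow> real"
  assumes d: "\<forall>j<p. d j > 0" and a0: "\<forall>j<p. a j \<ge> 0" and c: "cstar p d a > 0" and p0: "p > 0"
  shows "\<exists>k1 k2 k3. k1 < p \<and> k2 < p \<and> k3 < p \<and> k1 \<noteq> k2 \<and> k1 \<noteq> k3 \<and> k2 \<noteq> k3 \<and>
           a k1 \<noteq> 0 \<and> a k2 \<noteq> 0 \<and> a k3 \<noteq> 0"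
proof -
  define Z where "Z = {j \<in> {..<p}. a j \<noteq> 0}"
  define Mx where "Mx = Max ((\<lambda>j. d j * a j) ` {..<p})"
  have finZ: "finite Z" by (simp add: Z_def)
  have Mx: "d j * a j \<le> Mx" if "j < p" for j unfolding Mx_def by (rule Max_ge) (use that in auto)
  have Mx0: "0 \<le> Mx" using Mx[of 0] p0 d a0 by (meson mult_nonneg_nonneg less_imp_le order_trans)
  have "card Z \<ge> 3"
  proof (rule ccontr)
    assume "\<not> card Z \<ge> 3"
    then have cZ: "card Z \<le> 2" by simp
    have "(\<Sum>j<p. d j * a j) = (\<Sum>j\<in>Z. d j * a j)"
      by (rule sum.mono_neutral_right) (auto simp: Z_def)
    also have "\<dots> \<le> (\<Sum>j\<in>Z. Mx)" by (rule sum_mono) (auto simp: Z_def intro: Mx)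
    also have "\<dots> = real (card Z) * Mx" by simp
    also have "\<dots> \<le> 2 * Mx" using cZ Mx0 by (intro mult_right_mono) auto
    finally have "cstar p d a \<le> 0" by (simp add: cstar_def Mx_def)
    then show False using c by simp
  qed
  then have "Z \<noteq> {}" by auto
  then obtain k1 where k1: "k1 \<in> Z" by blast
  have "card (Z - {k1}) \<ge> 2" using \<open>card Z \<ge> 3\<close> k1 finZ by (simp add: card_Diff_singleton)
  then have "Z - {k1} \<noteq> {}" by (metis card.empty not_numeral_le_zero)
  then obtain k2 where k2: "k2 \<in> Z - {k1}" by blast
  have "card (Z - {k1} - {k2}) \<ge> 1" using \<open>card (Z - {k1}) \<ge> 2\<close> k2 finZ by (simp add: card_Diff_singleton)
  then have "Z - {k1} - {k2} \<noteq> {}" by (metis card.empty not_one_le_zero)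
  then obtain k3 where k3: "k3 \<in> Z - {k1} - {k2}" by blast
  show ?thesis using k1 k2 k3 by (intro exI[of _ k1] exI[of _ k2] exI[of _ k3]) (auto simp: Z_def)
qed



theorem corollary4:
  fixes p :: nat and d \<gamma> a :: "nat \<Rightarrow> real" and \<alpha> :: real
  assumes p3: "p \<ge> 3"
    and dpos: "\<forall>j<p. d j > 0"
    and gnn: "\<forall>j<p. \<gamma> j \<ge> 0"
    and sorted: "\<forall>i j. i \<le> j \<and> j < p \<longrightarrow> dstar d \<gamma> j \<le> dstar d \<gamma> i"
    and a_feas: "feasibleA p d \<gamma> a"
    and a_max: "\<forall>b. feasibleA p d \<gamma> b \<longrightarrow> cstar p d b \<le> cstar p d a"
    and a_uniq: "\<forall>b. feasibleA p d \<gamma> b \<and> cstar p d b = cstar p d a \<longrightarrow> (\<forall>j<p. b j = a j)"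
    and alpha: "\<alpha> \<ge> Max ((\<lambda>j. d j / (d j + \<gamma> j)) ` {..<p})"
  defines "lam \<equiv> (\<lambda>j. \<alpha> * (d j + \<gamma> j) - d j)"
    and "S4 \<equiv> dstar d \<gamma> 0 + dstar d \<gamma> 1 + dstar d \<gamma> 2 + (if p \<ge> 4 then dstar d \<gamma> 3 else 0)"
  shows "max (bayes_risk p d (shrink_est p d a) lam) (max_risk p d (shrink_est p d a) lam)
           \<le> bayes_risk p d (bayes_rule d lam) lam + ennreal (S4 / \<alpha>)
       \<and> bayes_risk p d (bayes_rule d lam) lam + ennreal (S4 / \<alpha>)
           = minimax_linear_risk p d lam + ennreal (S4 / \<alpha>)
       \<and> bayes_risk p d (bayes_rule d lam) lam
           = ennreal ((\<Sum>j<p. d j) - (\<Sum>j<p. dstar d \<gamma> j) / \<alpha>)"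
proof -
  define T where "T = (\<Sum>j<p. dstar d \<gamma> j)"
  define c where "c = cstar p d a"
  have dg: "d j + \<gamma> j > 0" if "j < p" for j using dpos gnn that by (auto simp: add_pos_nonneg)
  have aj: "d j / (d j + \<gamma> j) \<le> \<alpha>" if "j < p" for j
  proof -
    have "d j / (d j + \<gamma> j) \<le> Max ((\<lambda>j. d j / (d j + \<gamma> j)) ` {..<p})"
      by (rule Max_ge) (use that in auto)
    then show ?thesis using alpha by linarith
  qed
  have apos: "\<alpha> > 0"
  proof -
    have "0 < d 0 / (d 0 + \<gamma> 0)" using dpos dg[of 0] p3 by simp
    then show ?thesis using aj[of 0] p3 by simp
  qed
  have lam0: "\<forall>j<p. lam j \<ge> 0"
  proof (intro allI impI)
    fix j assume j: "j < p"
    have "d j \<le> \<alpha> * (d j + \<gamma> j)" using aj[OF j] dg[OF j] by (simp add: divide_le_eq)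
    then show "lam j \<ge> 0" by (simp add: lam_def)
  qed
  have dl: "d j + lam j = \<alpha> * (d j + \<gamma> j)" for j by (simp add: lam_def)
  have Vt: "(\<Sum>j<p. d j * lam j / (d j + lam j)) = (\<Sum>j<p. d j) - T / \<alpha>"
  proof -
    have "d j * lam j / (d j + lam j) = d j - dstar d \<gamma> j / \<alpha>" if "j < p" for j
    proof -
      have "d j + lam j > 0" using dl[of j] apos dg[OF that] by simp
      then have "d j * lam j / (d j + lam j) = d j - (d j)^2 / (d j + lam j)"
        by (simp add: field_simps power2_eq_square)
      also have "(d j)^2 / (d j + lam j) = dstar d \<gamma> j / \<alpha>"
        using apos dg[OF that] by (simp add: dl dstar_def field_simps)
      finally show ?thesis .
    qed
    then have "(\<Sum>j<p. d j * lam j / (d j + lam j)) = (\<Sum>j<p. d j - dstar d \<gamma> j / \<alpha>)" by simp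
    also have "\<dots> = (\<Sum>j<p. d j) - T / \<alpha>" by (simp add: sum_subtractf sum_divide_distrib T_def)
    finally show ?thesis .
  qed
  note LR = linear_results[OF dpos lam0]
  have bayesV: "bayes_risk p d (bayes_rule d lam) lam = ennreal ((\<Sum>j<p. d j) - T / \<alpha>)"
    using LR(1) Vt by simp
  have minV: "minimax_linear_risk p d lam = ennreal ((\<Sum>j<p. d j) - T / \<alpha>)"
    using LR(2) Vt by simp
  have cpos: "c > 0" and cT: "T * (T - S4) \<le> c^2"
    using opt_bound[OF p3 dpos gnn sorted a_max] by (simp_all add: c_def T_def S4_def)
  have a0: "\<forall>j<p. a j \<ge> 0" using a_feas by (simp add: feasibleA_def)
  have aT: "(\<Sum>j<p. (d j + \<gamma> j) * (a j)^2) = T" using a_feas by (simp add: feasibleA_def T_def)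
  obtain k1 k2 k3 where k: "k1 < p" "k2 < p" "k3 < p" "k1 \<noteq> k2" "k1 \<noteq> k3" "k2 \<noteq> k3"
      "a k1 \<noteq> 0" "a k2 \<noteq> 0" "a k3 \<noteq> 0"
    using three_nonzero[OF dpos a0 cpos[unfolded c_def]] p3 by auto
  have Tpos: "T > 0" unfolding T_def
  proof (rule sum_pos)
    have "0 \<in> {..<p}" using p3 by simp
    then show "{..<p} \<noteq> {}" by blast
  qed (use dpos gnn dstar_pos in auto)
  define m where "m = \<alpha> * T"
  have mpos: "m > 0" using apos Tpos by (simp add: m_def)
  have EQl: "(\<Sum>j<p. (a j)^2 * (d j + lam j)) = m"
  proof -
    have "(\<Sum>j<p. (a j)^2 * (d j + lam j)) = \<alpha> * (\<Sum>j<p. (d j + \<gamma> j) * (a j)^2)"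
      by (simp add: dl sum_distrib_left mult_ac)
    then show ?thesis using aT by (simp add: m_def)
  qed
  note SR = shrink_risk[OF dpos a0 k _ mpos, folded c_def]
  define Bd where "Bd = (\<Sum>j<p. d j) - c^2 / m"
  have Bd_le: "Bd \<le> ((\<Sum>j<p. d j) - T / \<alpha>) + S4 / \<alpha>"
  proof -
    have "(T - S4) / \<alpha> = T * (T - S4) / m" using Tpos apos by (simp add: m_def field_simps)
    also have "\<dots> \<le> c^2 / m" using cT mpos by (simp add: divide_right_mono)
    finally show ?thesis unfolding Bd_def by (simp add: diff_divide_distrib)
  qed
  have Vnn: "0 \<le> (\<Sum>j<p. d j) - T / \<alpha>"
  proof -
    have "0 \<le> (\<Sum>j<p. d j * lam j / (d j + lam j))"
    proof (rule sum_nonneg)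
      fix j assume "j \<in> {..<p}"
      then have "0 < d j" "0 \<le> lam j" using dpos lam0 by auto
      then show "0 \<le> d j * lam j / (d j + lam j)" by simp
    qed
    then show ?thesis using Vt by simp
  qed
  have S4nn: "0 \<le> S4 / \<alpha>"
  proof -
    have w: "0 \<le> dstar d \<gamma> j" if "j < p" for j using dstar_pos[of d j \<gamma>] dpos gnn that by auto
    have "0 \<le> S4" unfolding S4_def using w[of 0] w[of 1] w[of 2] w[of 3] p3 by auto
    then show ?thesis using apos by simp
  qed
  have target: "ennreal Bd \<le> bayes_risk p d (bayes_rule d lam) lam + ennreal (S4 / \<alpha>)"
    unfolding bayesV using Bd_le Vnn S4nn by (simp add: ennreal_plus[symmetric] ennreal_leI del: ennreal_plus)
  have maxr: "max_risk p d (shrink_est p d a) lam \<le> ennreal Bd"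
    unfolding max_risk_def
  proof (rule SUP_least)
    fix \<theta> assume th: "\<theta> \<in> hyperrect p lam"
    have EQ: "(\<Sum>j<p. (a j)^2 * (d j + (\<theta> j)^2)) \<le> m"
      unfolding EQl[symmetric] using th by (intro sum_mono mult_left_mono) (auto simp: hyperrect_def)
    have "risk p d (shrink_est p d a) \<theta> \<le> ennreal ((\<Sum>j<p. d j) - c^2 * (2 / m - (\<Sum>j<p. (a j)^2 * (d j + (\<theta> j)^2)) / m^2))"
      using SR cpos by (auto simp: c_def)
    also have "\<dots> \<le> ennreal Bd"
    proof (rule ennreal_leI)
      have "1 / m \<le> 2 / m - (\<Sum>j<p. (a j)^2 * (d j + (\<theta> j)^2)) / m^2"
      proof -
        have "(\<Sum>j<p. (a j)^2 * (d j + (\<theta> j)^2)) / m^2 \<le> m / m^2"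
          using EQ mpos by (simp add: divide_right_mono)
        also have "m / m^2 = 1 / m" using mpos by (simp add: power2_eq_square)
        finally show ?thesis by simp
      qed
      then have "c^2 * (1 / m) \<le> c^2 * (2 / m - (\<Sum>j<p. (a j)^2 * (d j + (\<theta> j)^2)) / m^2)"
        by (intro mult_left_mono) auto
      then show "(\<Sum>j<p. d j) - c^2 * (2 / m - (\<Sum>j<p. (a j)^2 * (d j + (\<theta> j)^2)) / m^2) \<le> Bd"
        by (simp add: Bd_def)
    qed
    finally show "risk p d (shrink_est p d a) \<theta> \<le> ennreal Bd" .
  qed
  define G where "G \<theta> = (\<Sum>j<p. d j) - c^2 * (2 / m - (\<Sum>j<p. (a j)^2 * (d j + (\<theta> j)^2)) / m^2)" for \<theta> :: "nat \<Rightarrow> real"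
  have Gnn: "0 \<le> G \<theta>" for \<theta> using SR cpos by (auto simp: G_def c_def)
  have Grisk: "risk p d (shrink_est p d a) \<theta> \<le> ennreal (G \<theta>)" for \<theta> using SR cpos by (auto simp: G_def c_def)
  have hG: "has_bochner_integral (gauss_vec p (\<lambda>_. 0) lam) G Bd"
  proof -
    have P: "prob_space (gauss_vec p (\<lambda>_. 0) lam)" unfolding gauss_vec_def by (rule prob_space_PiM) (rule nm_prob)
    have sq: "has_bochner_integral (gauss_vec p (\<lambda>_. 0) lam) (\<lambda>\<theta>. (\<theta> j)^2) (lam j)" if "j < p" for j
      unfolding gauss_vec_def
      using product_prob_space.hbi_one[OF nm_pps[of "\<lambda>_. 0" lam], of "{..<p}" j "\<lambda>t. t^2" "lam j + 0^2"]
        sq_mom[of "lam j" 0] lam0 that by simp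
    have "has_bochner_integral (gauss_vec p (\<lambda>_. 0) lam)
      (\<lambda>\<theta>. (\<Sum>j<p. d j) - c^2 * (2 / m) + (c^2 / m^2) * (\<Sum>j<p. (a j)^2 * (d j + (\<theta> j)^2)))
      ((\<Sum>j<p. d j) - c^2 * (2 / m) + (c^2 / m^2) * (\<Sum>j<p. (a j)^2 * (d j + lam j)))"
      by (intro has_bochner_integral_add has_bochner_integral_diff hbi_const_prob[OF P]
          has_bochner_integral_mult_right has_bochner_integral_sum sq) auto
    moreover have "(\<lambda>\<theta>. (\<Sum>j<p. d j) - c^2 * (2 / m) + (c^2 / m^2) * (\<Sum>j<p. (a j)^2 * (d j + (\<theta> j)^2))) = G"
      by (auto simp: G_def fun_eq_iff field_simps)
    moreover have "(\<Sum>j<p. d j) - c^2 * (2 / m) + (c^2 / m^2) * (\<Sum>j<p. (a j)^2 * (d j + lam j)) = Bd"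
      unfolding EQl Bd_def using mpos by (simp add: power2_eq_square field_simps)
    ultimately show ?thesis by simp
  qed
  have bayesr: "bayes_risk p d (shrink_est p d a) lam \<le> ennreal Bd"
  proof -
    have "bayes_risk p d (shrink_est p d a) lam \<le> (\<integral>\<^sup>+ \<theta>. ennreal (G \<theta>) \<partial>gauss_vec p (\<lambda>_. 0) lam)"
      unfolding bayes_risk_def by (rule nn_integral_mono) (rule Grisk)
    also have "\<dots> = ennreal Bd" by (rule hbi_nn_integral[OF hG Gnn])
    finally show ?thesis .
  qed
  show ?thesis
  proof (intro conjI)
    show "max (bayes_risk p d (shrink_est p d a) lam) (max_risk p d (shrink_est p d a) lam)
           \<le> bayes_risk p d (bayes_rule d lam) lam + ennreal (S4 / \<alpha>)"
      by (rule max.boundedI[OF order_trans[OF bayesr target] order_trans[OF maxr target]])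
    show "bayes_risk p d (bayes_rule d lam) lam + ennreal (S4 / \<alpha>) = minimax_linear_risk p d lam + ennreal (S4 / \<alpha>)"
      using bayesV minV by simp
    show "bayes_risk p d (bayes_rule d lam) lam = ennreal ((\<Sum>j<p. d j) - (\<Sum>j<p. dstar d \<gamma> j) / \<alpha>)"
      using bayesV by (simp add: T_def)
  qed
qed


end
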